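(* Let $\mathbb{I}=\{\mathbb{I}_1,\dots,\mathbb{I}_N\}$ be a random iterated function system on a compact metric space $(K,d)$. Then for all $\omega\in\Omega$, $\dim_{\mathrm P}F_\omega=\overline{\dim}_{\mathrm B}F_\omega$.
   Context: A random iterated function system on $(K,d)$ is a finite set $\mathbb{I}=\{\mathbb{I}_1,\dots,\mathbb{I}_N\}$ with $\mathbb{I}_i=\{S_{i,j}\}_{j\in\mathcal{I}_i}$, $\mathcal{I}_i$ finite nonempty, each $S_{i,j}:K\to K$ a bi-Lipschitz contraction ($0<\inf_{x\ne y}\frac{d(S_{i,j}x,S_{i,j}y)}{d(x,y)}$ and $\sup_{x\ne y}\frac{d(S_{i,j}x,S_{i,j}y)}{d(x,y)}<1$). $\Omega=\{1,\dots,N\}^{\mathbb{N}}$ and $F_\omega=\bigcap_k\bigcup_{i_1\in\mathcal{I}_{\omega_1},\dots,i_k\in\mathcal{I}_{\omega_k}}S_{\omega_1,i_1}\circ\cdots\circ S_{\omega_k,i_k}(K)$. $\dim_{\mathrm P}$ is packing dimension and $\overline{\dim}_{\mathrm B}$ upper box dimension. *)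

theory Defs
  imports "HOL-Analysis.Analysis" "HOL-Library.Liminf_Limsup"
begin

definition bilip_contraction :: "'a::metric_space set \<Rightarrow> ('a \<Rightarrow> 'a) \<Rightarrow> bool" where
  "bilip_contraction K f \<longleftrightarrow>
     (\<exists>c>0. \<exists>r<1. \<forall>x\<in>K. \<forall>y\<in>K. x \<noteq> y \<longrightarrow>
        c \<le> dist (f x) (f y) / dist x y \<and> dist (f x) (f y) / dist x y \<le> r)"

text \<open>The system: indices i in {1..N}, the i-th IFS consists of maps S i j, j in J i.\<close>
definition rifs :: "'a::metric_space set \<Rightarrow> nat \<Rightarrow> (nat \<Rightarrow> nat set) \<Rightarrow> (nat \<Rightarrow> nat \<Rightarrow> 'a \<Rightarrow> 'a) \<Rightarrow> bool" where
  "rifs K N J S \<longleftrightarrow> compact K \<and> K \<noteq> {} \<and> N \<ge> 1 \<and>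
     (\<forall>i\<in>{1..N}. finite (J i) \<and> J i \<noteq> {} \<and>
        (\<forall>j\<in>J i. S i j ` K \<subseteq> K \<and> bilip_contraction K (S i j)))"

fun compw :: "(nat \<Rightarrow> nat \<Rightarrow> 'a \<Rightarrow> 'a) \<Rightarrow> (nat \<Rightarrow> nat) \<Rightarrow> nat \<Rightarrow> nat list \<Rightarrow> 'a \<Rightarrow> 'a" where
  "compw S w m [] = id"
| "compw S w m (u # us) = S (w m) u \<circ> compw S w (Suc m) us"

text \<open>The random attractor F_omega (omega_1 is w 0, omega_2 is w 1, ...).\<close>
definition rattractor :: "'a set \<Rightarrow> (nat \<Rightarrow> nat set) \<Rightarrow> (nat \<Rightarrow> nat \<Rightarrow> 'a \<Rightarrow> 'a) \<Rightarrow> (nat \<Rightarrow> nat) \<Rightarrow> 'a set" where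
  "rattractor K J S w =
     (\<Inter>k. \<Union>{compw S w 0 us ` K | us. length us = k \<and> (\<forall>m<k. us ! m \<in> J (w m))})"

definition finite_delta_cover :: "'a::metric_space set \<Rightarrow> real \<Rightarrow> 'a set set \<Rightarrow> bool" where
  "finite_delta_cover F \<delta> C \<longleftrightarrow> finite C \<and> F \<subseteq> \<Union>C \<and> (\<forall>A\<in>C. bounded A \<and> diameter A \<le> \<delta>)"

definition cover_num :: "'a::metric_space set \<Rightarrow> real \<Rightarrow> nat" where
  "cover_num F \<delta> = (LEAST n. \<exists>C. finite_delta_cover F \<delta> C \<and> card C = n)"

definition upper_box_dim :: "'a::metric_space set \<Rightarrow> ereal" where
  "upper_box_dim F =
     (if \<forall>\<delta>>0. \<exists>C. finite_delta_cover F \<delta> C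
      then Limsup (at_right 0) (\<lambda>\<delta>. ereal (ln (real (cover_num F \<delta>)) / - ln \<delta>))
      else \<infinity>)"

text \<open>delta-packings of F: finitely many disjoint balls with centres in F and radii at most delta
  (a countable packing sum is the supremum of its finite partial sums).\<close>
definition packing_pre_delta :: "real \<Rightarrow> real \<Rightarrow> 'a::metric_space set \<Rightarrow> ennreal" where
  "packing_pre_delta s \<delta> F =
     (SUP P \<in> {P. finite P \<and> (\<forall>(x,r)\<in>P. x \<in> F \<and> 0 < r \<and> r \<le> \<delta>) \<and>
                  disjoint_family_on (\<lambda>(x,r). ball x r) P}.
        \<Sum>(x,r)\<in>P. ennreal ((2 * r) powr s))"

definition packing_premeasure :: "real \<Rightarrow> 'a::metric_space set \<Rightarrow> ennreal" where
  "packing_premeasure s F = (INF \<delta>\<in>{0<..}. packing_pre_delta s \<delta> F)"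

definition packing_measure :: "real \<Rightarrow> 'a::metric_space set \<Rightarrow> ennreal" where
  "packing_measure s F =
     (INF E \<in> {E :: nat \<Rightarrow> 'a set. F \<subseteq> (\<Union>i. E i)}. \<Sum>i. packing_premeasure s (E i))"

definition packing_dim :: "'a::metric_space set \<Rightarrow> ereal" where
  "packing_dim F = Inf {ereal s | s. 0 \<le> s \<and> packing_measure s F = 0}"

end

theory Submission
  imports Defs
begin

lemma diameter_le_metric:
  fixes A :: "'a::metric_space set"
  assumes "0 \<le> d" "\<And>x y. x \<in> A \<Longrightarrow> y \<in> A \<Longrightarrow> dist x y \<le> d"
  shows "diameter A \<le> d"
  using assms unfolding diameter_def by (auto intro!: cSUP_least)

lemma bounded_of_dist:
  fixes B :: "'a::metric_space set"
  assumes "\<And>x y. x \<in> B \<Longrightarrow> y \<in> B \<Longrightarrow> dist x y \<le> d"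
  shows "bounded B"
proof (cases "B = {}")
  case False
  then obtain a where "a \<in> B" by auto
  then show ?thesis using assms bounded_any_center[of B a] by blast
qed simp

lemma cover_num_le: "finite_delta_cover X d C \<Longrightarrow> cover_num X d \<le> card C"
  unfolding cover_num_def by (rule Least_le) blast

lemma cover_num_ex:
  assumes "\<exists>C. finite_delta_cover X d C"
  shows "\<exists>C. finite_delta_cover X d C \<and> card C = cover_num X d"
proof -
  have "\<exists>n. \<exists>C. finite_delta_cover X d C \<and> card C = n" using assms by blast
  from LeastI_ex[OF this] show ?thesis unfolding cover_num_def .
qed

lemma compact_has_cover:
  fixes X :: "'a::metric_space set"
  assumes "compact X" "0 < d"
  shows "\<exists>C. finite_delta_cover X d C"
proof -
  have "d/2 > 0" using assms by simp
  then obtain k where k: "finite k" "X \<subseteq> \<Union>((\<lambda>x. ball x (d/2)) ` k)"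
    using assms(1) unfolding compact_eq_totally_bounded by metis
  have "diameter (ball x (d/2)) \<le> d" for x
  proof (rule diameter_le_metric)
    show "0 \<le> d" using assms by simp
    fix y z assume "y \<in> ball x (d/2)" "z \<in> ball x (d/2)"
    then show "dist y z \<le> d" using dist_triangle[of y z x]
      by (auto simp: dist_commute)
  qed
  then show ?thesis using k unfolding finite_delta_cover_def
    by (intro exI[of _ "(\<lambda>x. ball x (d/2)) ` k"]) auto
qed

lemma cover_num_pos:
  assumes "X \<noteq> {}" "\<exists>C. finite_delta_cover X d C"
  shows "1 \<le> cover_num X d"
proof -
  obtain C where C: "finite_delta_cover X d C" "card C = cover_num X d"
    using cover_num_ex[OF assms(2)] by blast
  then have "C \<noteq> {}" using assms(1) unfolding finite_delta_cover_def by auto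
  then show ?thesis using C unfolding finite_delta_cover_def
    by (metis One_nat_def Suc_leI card_gt_0_iff)
qed

lemma cover_num_mono_set:
  assumes "X \<subseteq> Y" "\<exists>C. finite_delta_cover Y d C"
  shows "cover_num X d \<le> cover_num Y d" "\<exists>C. finite_delta_cover X d C"
proof -
  obtain C where C: "finite_delta_cover Y d C" "card C = cover_num Y d"
    using cover_num_ex[OF assms(2)] by blast
  then have "finite_delta_cover X d C" using assms(1) unfolding finite_delta_cover_def by auto
  then show "cover_num X d \<le> cover_num Y d" "\<exists>C. finite_delta_cover X d C"
    using C cover_num_le by metis+
qed

lemma cover_num_mono_delta:
  assumes "d \<le> d'" "\<exists>C. finite_delta_cover X d C"
  shows "cover_num X d' \<le> cover_num X d" "\<exists>C. finite_delta_cover X d' C"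
proof -
  obtain C where C: "finite_delta_cover X d C" "card C = cover_num X d"
    using cover_num_ex[OF assms(2)] by blast
  then have "finite_delta_cover X d' C" using assms(1) unfolding finite_delta_cover_def by force
  then show "cover_num X d' \<le> cover_num X d" "\<exists>C. finite_delta_cover X d' C"
    using C cover_num_le by metis+
qed

lemma cover_num_image_upper:
  fixes g :: "'a::metric_space \<Rightarrow> 'a"
  assumes "X \<subseteq> K" "\<And>x y. x \<in> K \<Longrightarrow> y \<in> K \<Longrightarrow> dist (g x) (g y) \<le> dist x y"
    "\<exists>C. finite_delta_cover X d C"
  shows "cover_num (g ` X) d \<le> cover_num X d" "\<exists>C. finite_delta_cover (g ` X) d C"
proof -
  obtain C where C: "finite_delta_cover X d C" "card C = cover_num X d"
    using cover_num_ex[OF assms(3)] by blast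
  have d0: "0 \<le> d" if "A \<in> C" for A
  proof (cases "A = {}")
    case True then show ?thesis using C(1) that unfolding finite_delta_cover_def by force
  next
    case False
    then obtain a where "a \<in> A" by auto
    then have "dist a a \<le> diameter A" using C(1) that unfolding finite_delta_cover_def
      by (metis diameter_bounded_bound)
    then show ?thesis using C(1) that unfolding finite_delta_cover_def by force
  qed
  have "finite_delta_cover (g ` X) d ((\<lambda>A. g ` (A \<inter> K)) ` C)"
    unfolding finite_delta_cover_def
  proof (intro conjI ballI)
    show "finite ((\<lambda>A. g ` (A \<inter> K)) ` C)" using C unfolding finite_delta_cover_def by auto
    show "g ` X \<subseteq> \<Union> ((\<lambda>A. g ` (A \<inter> K)) ` C)" using C assms(1) unfolding finite_delta_cover_def by blast
    fix B assume "B \<in> (\<lambda>A. g ` (A \<inter> K)) ` C"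
    then obtain A where A: "A \<in> C" "B = g ` (A \<inter> K)" by auto
    have dd: "dist x y \<le> d" if xy: "x \<in> B" "y \<in> B" for x y
    proof -
      obtain x' y' where "x' \<in> A \<inter> K" "y' \<in> A \<inter> K" "x = g x'" "y = g y'" using xy A by auto
      moreover have "dist x' y' \<le> diameter A" using A C(1) calculation
        unfolding finite_delta_cover_def by (auto intro: diameter_bounded_bound)
      ultimately show ?thesis using assms(2) A C(1) unfolding finite_delta_cover_def
        by (meson IntD2 order_trans)
    qed
    show "bounded B" using bounded_of_dist dd by blast
    show "diameter B \<le> d" using diameter_le_metric[OF d0[OF A(1)]] dd by blast
  qed
  moreover have "card ((\<lambda>A. g ` (A \<inter> K)) ` C) \<le> card C"
    using C(1) card_image_le unfolding finite_delta_cover_def by blast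
  ultimately show "cover_num (g ` X) d \<le> cover_num X d" "\<exists>C. finite_delta_cover (g ` X) d C"
    using C(2) cover_num_le[of "g ` X" d] by (metis order_trans)+
qed

lemma cover_num_image_lower:
  fixes g :: "'a::metric_space \<Rightarrow> 'a"
  assumes "X \<subseteq> K" "c > 0" "\<And>x y. x \<in> K \<Longrightarrow> y \<in> K \<Longrightarrow> c * dist x y \<le> dist (g x) (g y)"
    "\<exists>C. finite_delta_cover (g ` X) d C"
  shows "cover_num X (d / c) \<le> cover_num (g ` X) d" "\<exists>C. finite_delta_cover X (d/c) C"
proof -
  obtain C where C: "finite_delta_cover (g ` X) d C" "card C = cover_num (g ` X) d"
    using cover_num_ex[OF assms(4)] by blast
  have d0: "0 \<le> d" if "A \<in> C" for A
  proof (cases "A = {}")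
    case True then show ?thesis using C(1) that unfolding finite_delta_cover_def by force
  next
    case False
    then obtain a where "a \<in> A" by auto
    then have "dist a a \<le> diameter A" using C(1) that unfolding finite_delta_cover_def
      by (metis diameter_bounded_bound)
    then show ?thesis using C(1) that unfolding finite_delta_cover_def by force
  qed
  have "finite_delta_cover X (d/c) ((\<lambda>A. X \<inter> g -` A) ` C)"
    unfolding finite_delta_cover_def
  proof (intro conjI ballI)
    show "finite ((\<lambda>A. X \<inter> g -` A) ` C)" using C unfolding finite_delta_cover_def by auto
    show "X \<subseteq> \<Union> ((\<lambda>A. X \<inter> g -` A) ` C)"
    proof
      fix x assume "x \<in> X"
      then have "g x \<in> \<Union>C" using C(1) unfolding finite_delta_cover_def by auto
      then obtain A where "A \<in> C" "g x \<in> A" by auto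
      then show "x \<in> \<Union> ((\<lambda>A. X \<inter> g -` A) ` C)" using \<open>x \<in> X\<close> by auto
    qed
    fix B assume "B \<in> (\<lambda>A. X \<inter> g -` A) ` C"
    then obtain A where A: "A \<in> C" "B = X \<inter> g -` A" by auto
    have dd: "dist x y \<le> d / c" if xy: "x \<in> B" "y \<in> B" for x y
    proof -
      have "bounded A" using A C(1) unfolding finite_delta_cover_def by auto
      moreover have "g x \<in> A" "g y \<in> A" using xy A by auto
      ultimately have "dist (g x) (g y) \<le> diameter A" by (rule diameter_bounded_bound)
      moreover have "x \<in> K" "y \<in> K" using assms(1) xy A by auto
      then have "c * dist x y \<le> dist (g x) (g y)" using assms(3) by blast
      moreover have "diameter A \<le> d" using A C(1) unfolding finite_delta_cover_def by auto
      ultimately have "c * dist x y \<le> d" by linarith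
      then show ?thesis using assms(2) by (simp add: field_simps)
    qed
    show "bounded B" using bounded_of_dist dd by blast
    show "diameter B \<le> d / c" by (rule diameter_le_metric) (use d0[OF A(1)] assms(2) dd in auto)
  qed
  moreover have "card ((\<lambda>A. X \<inter> g -` A) ` C) \<le> card C"
    using C(1) card_image_le unfolding finite_delta_cover_def by blast
  ultimately show "cover_num X (d / c) \<le> cover_num (g ` X) d" "\<exists>C. finite_delta_cover X (d/c) C"
    using C(2) cover_num_le[of X "d/c"] by (metis order_trans)+
qed

lemma cover_num_union:
  fixes X :: "'a::metric_space set"
  assumes "finite I" "X \<subseteq> (\<Union>i\<in>I. Y i)" "\<And>i. i \<in> I \<Longrightarrow> \<exists>C. finite_delta_cover (Y i) d C"
  shows "cover_num X d \<le> (\<Sum>i\<in>I. cover_num (Y i) d)"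
proof -
  have "\<forall>i\<in>I. \<exists>C. finite_delta_cover (Y i) d C \<and> card C = cover_num (Y i) d"
    using assms(3) cover_num_ex by blast
  then obtain CC where CC: "\<And>i. i \<in> I \<Longrightarrow> finite_delta_cover (Y i) d (CC i) \<and> card (CC i) = cover_num (Y i) d"
    by metis
  have "finite_delta_cover X d (\<Union>i\<in>I. CC i)"
    unfolding finite_delta_cover_def
  proof (intro conjI ballI)
    show "finite (\<Union>i\<in>I. CC i)" using CC assms(1) unfolding finite_delta_cover_def by auto
    show "X \<subseteq> \<Union> (\<Union>i\<in>I. CC i)"
    proof
      fix x assume "x \<in> X"
      then obtain i where i: "i \<in> I" "x \<in> Y i" using assms(2) by auto
      then have "x \<in> \<Union>(CC i)" using CC[OF i(1)] unfolding finite_delta_cover_def by auto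
      then show "x \<in> \<Union> (\<Union>i\<in>I. CC i)" using i by auto
    qed
    fix A assume "A \<in> (\<Union>i\<in>I. CC i)"
    then obtain i where "i \<in> I" "A \<in> CC i" by auto
    then show "bounded A" "diameter A \<le> d" using CC unfolding finite_delta_cover_def by auto
  qed
  then have "cover_num X d \<le> card (\<Union>i\<in>I. CC i)" by (rule cover_num_le)
  also have "\<dots> \<le> (\<Sum>i\<in>I. card (CC i))" by (rule card_UN_le[OF assms(1)])
  also have "\<dots> = (\<Sum>i\<in>I. cover_num (Y i) d)" using CC by simp
  finally show ?thesis .
qed

lemma sep_card:
  fixes X :: "'a::metric_space set"
  assumes "finite_delta_cover X d C" "Y \<subseteq> X" "\<And>x y. x \<in> Y \<Longrightarrow> y \<in> Y \<Longrightarrow> x \<noteq> y \<Longrightarrow> d < dist x y"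
  shows "finite Y" "card Y \<le> card C"
proof -
  have "\<forall>y\<in>Y. \<exists>A\<in>C. y \<in> A" using assms(1,2) unfolding finite_delta_cover_def by blast
  then obtain f where f: "\<And>y. y \<in> Y \<Longrightarrow> f y \<in> C \<and> y \<in> f y" by metis
  have inj: "inj_on f Y"
  proof (rule inj_onI)
    fix x y assume xy: "x \<in> Y" "y \<in> Y" "f x = f y"
    show "x = y"
    proof (rule ccontr)
      assume "x \<noteq> y"
      then have "d < dist x y" using assms(3) xy by auto
      moreover have "dist x y \<le> diameter (f x)" using f[of x] f[of y] xy assms(1)
        unfolding finite_delta_cover_def by (metis diameter_bounded_bound)
      moreover have "diameter (f x) \<le> d" using f[of x] xy assms(1) unfolding finite_delta_cover_def by auto
      ultimately show False by linarith
    qed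
  qed
  moreover have "f ` Y \<subseteq> C" using f by auto
  moreover have "finite C" using assms(1) unfolding finite_delta_cover_def by auto
  ultimately show "finite Y" "card Y \<le> card C"
    by (auto intro: inj_on_finite card_inj_on_le)
qed

lemma max_sep_set:
  fixes X :: "'a::metric_space set"
  assumes "compact X" "0 < a"
  shows "\<exists>Y. Y \<subseteq> X \<and> finite Y \<and> (\<forall>x\<in>Y. \<forall>y\<in>Y. x \<noteq> y \<longrightarrow> a < dist x y)
            \<and> (\<forall>x\<in>X. \<exists>y\<in>Y. dist x y \<le> a)"
proof -
  obtain C0 where C0: "finite_delta_cover X (a/2) C0" using compact_has_cover assms by (metis half_gt_zero)
  define SS where "SS = {Y. Y \<subseteq> X \<and> (\<forall>x\<in>Y. \<forall>y\<in>Y. x \<noteq> y \<longrightarrow> a < dist x y)}"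
  have bnd: "finite Y \<and> card Y \<le> card C0" if "Y \<in> SS" for Y
  proof -
    have sep: "\<And>x y. x \<in> Y \<Longrightarrow> y \<in> Y \<Longrightarrow> x \<noteq> y \<Longrightarrow> a/2 < dist x y"
    proof -
      fix x y assume "x \<in> Y" "y \<in> Y" "x \<noteq> y"
      then have "a < dist x y" using that unfolding SS_def by blast
      then show "a/2 < dist x y" using assms(2) by linarith
    qed
    have "Y \<subseteq> X" using that unfolding SS_def by blast
    from sep_card[OF C0 this sep] show ?thesis by blast
  qed
  have "card ` SS \<subseteq> {..card C0}" using bnd by (auto simp del: atMost_iff)
  then have fin: "finite (card ` SS)" by (rule finite_subset) simp
  have "{} \<in> SS" unfolding SS_def by auto
  then have ne: "card ` SS \<noteq> {}" by auto
  obtain Y where Y: "Y \<in> SS" "card Y = Max (card ` SS)"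
    using Max_in[OF fin ne] by auto
  have "\<exists>y\<in>Y. dist x y \<le> a" if x: "x \<in> X" for x
  proof (rule ccontr)
    assume "\<not> ?thesis"
    then have far: "\<forall>y\<in>Y. a < dist x y" by (simp add: not_le)
    have "x \<notin> Y"
    proof
      assume "x \<in> Y" then have "a < dist x x" using far by blast
      then show False using assms(2) by simp
    qed
    have "insert x Y \<in> SS" unfolding SS_def
    proof (intro CollectI conjI ballI impI)
      show "insert x Y \<subseteq> X" using Y(1) x unfolding SS_def by blast
      fix u v assume uv: "u \<in> insert x Y" "v \<in> insert x Y" "u \<noteq> v"
      show "a < dist u v"
      proof (cases "u = x")
        case True
        then show ?thesis using uv far by auto
      next
        case False
        show ?thesis
        proof (cases "v = x")
          case True then show ?thesis using uv far False by (auto simp: dist_commute)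
        next
          case F2: False
          then show ?thesis using uv False Y(1) unfolding SS_def by blast
        qed
      qed
    qed
    then have "card (insert x Y) \<le> Max (card ` SS)" using fin by (intro Max_ge) (auto simp del: card_insert_disjoint)
    moreover have "card (insert x Y) = Suc (card Y)" using bnd[OF Y(1)] \<open>x \<notin> Y\<close> by simp
    ultimately show False using Y(2) by simp
  qed
  moreover have "Y \<subseteq> X" "\<forall>x\<in>Y. \<forall>y\<in>Y. x \<noteq> y \<longrightarrow> a < dist x y"
    using Y(1) unfolding SS_def by simp_all
  moreover have "finite Y" using bnd[OF Y(1)] by simp
  ultimately show ?thesis by blast
qed

lemma max_sep_cover_num:
  fixes X :: "'a::metric_space set"
  assumes "compact X" "0 < a"
  shows "\<exists>Y. Y \<subseteq> X \<and> finite Y \<and> (\<forall>x\<in>Y. \<forall>y\<in>Y. x \<noteq> y \<longrightarrow> a < dist x y)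
            \<and> cover_num X (2*a) \<le> card Y"
proof -
  obtain Y where Y: "Y \<subseteq> X" "finite Y" "\<forall>x\<in>Y. \<forall>y\<in>Y. x \<noteq> y \<longrightarrow> a < dist x y"
    "\<forall>x\<in>X. \<exists>y\<in>Y. dist x y \<le> a"
    using max_sep_set[OF assms] by blast
  have "diameter (cball y a) \<le> 2*a" for y
  proof (rule diameter_le_metric)
    show "0 \<le> 2*a" using assms by simp
    fix u v assume "u \<in> cball y a" "v \<in> cball y a"
    then show "dist u v \<le> 2*a" using dist_triangle[of u v y] by (auto simp: dist_commute)
  qed
  moreover have "X \<subseteq> \<Union>((\<lambda>y. cball y a) ` Y)"
  proof
    fix x assume "x \<in> X"
    then obtain y where "y \<in> Y" "dist x y \<le> a" using Y(4) by blast
    then show "x \<in> \<Union>((\<lambda>y. cball y a) ` Y)" by (auto simp: dist_commute)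
  qed
  ultimately have "finite_delta_cover X (2*a) ((\<lambda>y. cball y a) ` Y)"
    using Y(2) unfolding finite_delta_cover_def by auto
  then have "cover_num X (2*a) \<le> card ((\<lambda>y. cball y a) ` Y)" by (rule cover_num_le)
  also have "\<dots> \<le> card Y" using Y(2) card_image_le by blast
  finally show ?thesis using Y by blast
qed

lemma compw_shift: "compw S w (Suc m) us = compw S (\<lambda>n. w (Suc n)) m us"
  by (induction us arbitrary: m) auto

lemma compw_Cons0: "compw S w 0 (u # us) = S (w 0) u \<circ> compw S (\<lambda>n. w (Suc n)) 0 us"
  by (simp add: compw_shift)

definition Wd :: "(nat \<Rightarrow> nat set) \<Rightarrow> (nat \<Rightarrow> nat) \<Rightarrow> nat \<Rightarrow> nat list set" where
  "Wd J w n = {us. length us = n \<and> (\<forall>m<n. us ! m \<in> J (w m))}"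

definition Aset :: "'a set \<Rightarrow> (nat \<Rightarrow> nat set) \<Rightarrow> (nat \<Rightarrow> nat \<Rightarrow> 'a \<Rightarrow> 'a) \<Rightarrow> (nat \<Rightarrow> nat) \<Rightarrow> nat \<Rightarrow> 'a set" where
  "Aset K J S w n = (\<Union>us\<in>Wd J w n. compw S w 0 us ` K)"

lemma rattractor_Aset: "rattractor K J S w = (\<Inter>n. Aset K J S w n)"
  unfolding rattractor_def Aset_def Wd_def by blast

lemma Wd_0: "Wd J w 0 = {[]}"
  unfolding Wd_def by auto

lemma Wd_Suc: "us \<in> Wd J w (Suc n) \<longleftrightarrow>
   (\<exists>u us'. us = u # us' \<and> u \<in> J (w 0) \<and> us' \<in> Wd J (\<lambda>n. w (Suc n)) n)"
proof
  assume us: "us \<in> Wd J w (Suc n)"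
  then obtain u us' where "us = u # us'" unfolding Wd_def by (cases us) auto
  moreover have "u \<in> J (w 0)" using us calculation unfolding Wd_def by force
  moreover have "us' \<in> Wd J (\<lambda>n. w (Suc n)) n"
    using us calculation unfolding Wd_def by force
  ultimately show "\<exists>u us'. us = u # us' \<and> u \<in> J (w 0) \<and> us' \<in> Wd J (\<lambda>n. w (Suc n)) n" by blast
next
  assume "\<exists>u us'. us = u # us' \<and> u \<in> J (w 0) \<and> us' \<in> Wd J (\<lambda>n. w (Suc n)) n"
  then obtain u us' where h: "us = u # us'" "u \<in> J (w 0)" "us' \<in> Wd J (\<lambda>n. w (Suc n)) n" by blast
  show "us \<in> Wd J w (Suc n)" unfolding Wd_def
  proof (intro CollectI conjI allI impI)
    show "length us = Suc n" using h unfolding Wd_def by simp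
    fix m assume "m < Suc n"
    then show "us ! m \<in> J (w m)" using h unfolding Wd_def by (cases m) auto
  qed
qed

lemma Aset_0: "Aset K J S w 0 = K"
  unfolding Aset_def Wd_0 by simp

lemma Aset_Suc: "Aset K J S w (Suc n) = (\<Union>u\<in>J (w 0). S (w 0) u ` Aset K J S (\<lambda>n. w (Suc n)) n)"
proof (intro equalityI subsetI)
  fix x assume "x \<in> Aset K J S w (Suc n)"
  then obtain us y where "us \<in> Wd J w (Suc n)" "y \<in> K" "x = compw S w 0 us y"
    unfolding Aset_def by auto
  then obtain u us' where "us = u # us'" "u \<in> J (w 0)" "us' \<in> Wd J (\<lambda>n. w (Suc n)) n"
    using Wd_Suc by metis
  moreover have "x = S (w 0) u (compw S (\<lambda>n. w (Suc n)) 0 us' y)"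
    using \<open>x = _\<close> calculation by (simp add: compw_shift)
  ultimately show "x \<in> (\<Union>u\<in>J (w 0). S (w 0) u ` Aset K J S (\<lambda>n. w (Suc n)) n)"
    using \<open>y \<in> K\<close> unfolding Aset_def by blast
next
  fix x assume "x \<in> (\<Union>u\<in>J (w 0). S (w 0) u ` Aset K J S (\<lambda>n. w (Suc n)) n)"
  then obtain u us' y where "u \<in> J (w 0)" "us' \<in> Wd J (\<lambda>n. w (Suc n)) n" "y \<in> K"
    "x = S (w 0) u (compw S (\<lambda>n. w (Suc n)) 0 us' y)"
    unfolding Aset_def by auto
  moreover have "u # us' \<in> Wd J w (Suc n)" using Wd_Suc calculation by metis
  ultimately show "x \<in> Aset K J S w (Suc n)" unfolding Aset_def
    by (intro UN_I[of "u # us'"]) (auto simp: compw_shift)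
qed

lemma finite_Wd:
  assumes "\<forall>n. w n \<in> I" "finite I" "\<forall>i\<in>I. finite (J i)"
  shows "finite (Wd J w n)"
proof -
  have "Wd J w n \<subseteq> {xs. set xs \<subseteq> (\<Union>i\<in>I. J i) \<and> length xs = n}"
  proof
    fix us assume us: "us \<in> Wd J w n"
    have "set us \<subseteq> (\<Union>i\<in>I. J i)"
    proof
      fix a assume "a \<in> set us"
      then obtain m where "m < length us" "us ! m = a" by (metis in_set_conv_nth)
      then show "a \<in> (\<Union>i\<in>I. J i)" using us assms(1) unfolding Wd_def by auto
    qed
    then show "us \<in> {xs. set xs \<subseteq> (\<Union>i\<in>I. J i) \<and> length xs = n}" using us unfolding Wd_def by simp
  qed
  moreover have "finite (\<Union>i\<in>I. J i)" using assms(2,3) by simp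
  ultimately show ?thesis using finite_lists_length_eq finite_subset by blast
qed

locale rifs_loc =
  fixes K :: "'a::metric_space set" and N :: nat and J :: "nat \<Rightarrow> nat set"
    and S :: "nat \<Rightarrow> nat \<Rightarrow> 'a \<Rightarrow> 'a" and c r :: real
  assumes rifs: "rifs K N J S" and c: "0 < c" and r: "0 \<le> r" "r < 1"
    and lip: "\<And>i j x y. i \<in> {1..N} \<Longrightarrow> j \<in> J i \<Longrightarrow> x \<in> K \<Longrightarrow> y \<in> K \<Longrightarrow>
       c * dist x y \<le> dist (S i j x) (S i j y) \<and> dist (S i j x) (S i j y) \<le> r * dist x y"
begin

definition good :: "(nat \<Rightarrow> nat) \<Rightarrow> bool" where "good w \<longleftrightarrow> (\<forall>n. w n \<in> {1..N})"

lemma good_Suc: "good w \<Longrightarrow> good (\<lambda>n. w (Suc n))" unfolding good_def by auto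
lemma good_shift: "good w \<Longrightarrow> good (\<lambda>n. w (n + k))" unfolding good_def by auto

lemma K_compact: "compact K" and K_ne: "K \<noteq> {}"
  using rifs unfolding rifs_def by auto

lemma J_fin: "i \<in> {1..N} \<Longrightarrow> finite (J i)" and J_ne: "i \<in> {1..N} \<Longrightarrow> J i \<noteq> {}"
  using rifs unfolding rifs_def by auto

lemma S_K: assumes "i \<in> {1..N}" "j \<in> J i" "x \<in> K" shows "S i j x \<in> K"
proof -
  have "S i j ` K \<subseteq> K" using rifs assms(1,2) unfolding rifs_def by blast
  then show ?thesis using assms(3) by blast
qed

lemma S_cont: assumes "i \<in> {1..N}" "j \<in> J i" shows "continuous_on K (S i j)"
  unfolding continuous_on_iff
proof (intro ballI allI impI)
  fix x e assume x: "x \<in> K" and e: "(0::real) < e"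
  show "\<exists>d>0. \<forall>x'\<in>K. dist x' x < d \<longrightarrow> dist (S i j x') (S i j x) < e"
  proof (intro exI[of _ e] conjI ballI impI)
    fix x' assume "x' \<in> K" "dist x' x < e"
    moreover have "dist (S i j x') (S i j x) \<le> r * dist x' x" using lip[OF assms \<open>x' \<in> K\<close> x] by simp
    moreover have "r * dist x' x \<le> dist x' x" using r mult_left_le_one_le[of "dist x' x" r] by simp
    ultimately show "dist (S i j x') (S i j x) < e" by linarith
  qed (use e in simp)
qed

lemma S_inj: assumes "i \<in> {1..N}" "j \<in> J i" "x \<in> K" "y \<in> K" "S i j x = S i j y" shows "x = y"
proof -
  have "c * dist x y \<le> 0" using lip[OF assms(1-4)] assms(5) by simp
  then have "dist x y \<le> 0" using c by (simp add: mult_le_0_iff)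
  then show ?thesis by simp
qed

lemma compw_props:
  assumes "good w" "us \<in> Wd J w n"
  shows "(\<forall>x\<in>K. compw S w 0 us x \<in> K) \<and>
    (\<forall>x\<in>K. \<forall>y\<in>K. c ^ n * dist x y \<le> dist (compw S w 0 us x) (compw S w 0 us y) \<and>
                   dist (compw S w 0 us x) (compw S w 0 us y) \<le> r ^ n * dist x y)"
  using assms
proof (induction n arbitrary: w us)
  case 0
  then show ?case unfolding Wd_0 by simp
next
  case (Suc n)
  obtain u us' where h: "us = u # us'" "u \<in> J (w 0)" "us' \<in> Wd J (\<lambda>n. w (Suc n)) n"
    using Suc.prems(2) Wd_Suc by metis
  have w0: "w 0 \<in> {1..N}" using Suc.prems(1) unfolding good_def by auto
  note IH = Suc.IH[OF good_Suc[OF Suc.prems(1)] h(3)]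
  have eq: "compw S w 0 us = S (w 0) u \<circ> compw S (\<lambda>n. w (Suc n)) 0 us'"
    using h(1) by (simp add: compw_shift)
  show ?case
  proof (intro conjI ballI)
    fix x assume "x \<in> K"
    then show "compw S w 0 us x \<in> K" using IH S_K[OF w0 h(2)] eq by simp
  next
    fix x y assume xy: "x \<in> K" "y \<in> K"
    let ?g = "compw S (\<lambda>n. w (Suc n)) 0 us'"
    have gK: "?g x \<in> K" "?g y \<in> K" using IH xy by auto
    have L: "c * dist (?g x) (?g y) \<le> dist (S (w 0) u (?g x)) (S (w 0) u (?g y))"
      and U: "dist (S (w 0) u (?g x)) (S (w 0) u (?g y)) \<le> r * dist (?g x) (?g y)"
      using lip[OF w0 h(2) gK] by auto
    have L2: "c ^ n * dist x y \<le> dist (?g x) (?g y)" and U2: "dist (?g x) (?g y) \<le> r ^ n * dist x y"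
      using IH xy by auto
    have "c ^ Suc n * dist x y = c * (c ^ n * dist x y)" by simp
    also have "\<dots> \<le> c * dist (?g x) (?g y)" using L2 c by simp
    also have "\<dots> \<le> dist (compw S w 0 us x) (compw S w 0 us y)" using L eq by simp
    finally show "c ^ Suc n * dist x y \<le> dist (compw S w 0 us x) (compw S w 0 us y)" .
    have "dist (compw S w 0 us x) (compw S w 0 us y) \<le> r * dist (?g x) (?g y)" using U eq by simp
    also have "\<dots> \<le> r * (r ^ n * dist x y)" using U2 r mult_left_mono by blast
    also have "\<dots> = r ^ Suc n * dist x y" by simp
    finally show "dist (compw S w 0 us x) (compw S w 0 us y) \<le> r ^ Suc n * dist x y" .
  qed
qed

lemma Aset_props:
  assumes "good w"
  shows "Aset K J S w n \<subseteq> K \<and> Aset K J S w n \<noteq> {} \<and> compact (Aset K J S w n) \<and>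
         Aset K J S w (Suc n) \<subseteq> Aset K J S w n"
  using assms
proof (induction n arbitrary: w)
  case 0
  have w0: "w 0 \<in> {1..N}" using 0 unfolding good_def by auto
  have "Aset K J S w (Suc 0) \<subseteq> K"
    unfolding Aset_Suc Aset_0 using S_K[OF w0] by auto
  then show ?case using K_compact K_ne unfolding Aset_0 by simp
next
  case (Suc n)
  have w0: "w 0 \<in> {1..N}" using Suc.prems unfolding good_def by auto
  note IH = Suc.IH[OF good_Suc[OF Suc.prems]]
  let ?A = "Aset K J S (\<lambda>n. w (Suc n))"
  have sub: "Aset K J S w (Suc n) \<subseteq> K" unfolding Aset_Suc using IH S_K[OF w0] by blast
  have ne: "Aset K J S w (Suc n) \<noteq> {}"
  proof -
    obtain u where "u \<in> J (w 0)" using J_ne[OF w0] by auto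
    moreover obtain y where "y \<in> ?A n" using IH by auto
    ultimately show ?thesis unfolding Aset_Suc by blast
  qed
  have cpt: "compact (Aset K J S w (Suc n))" unfolding Aset_Suc
  proof (intro compact_UN ballI)
    show "finite (J (w 0))" using J_fin[OF w0] .
    fix u assume "u \<in> J (w 0)"
    then show "compact (S (w 0) u ` ?A n)"
      using IH S_cont[OF w0] by (meson compact_continuous_image continuous_on_subset)
  qed
  have "Aset K J S w (Suc (Suc n)) \<subseteq> Aset K J S w (Suc n)"
    unfolding Aset_Suc[of K J S w "Suc n"] Aset_Suc[of K J S w n] using IH by blast
  then show ?case using sub ne cpt by blast
qed

lemma Aset_mono: assumes "good w" "m \<le> n" shows "Aset K J S w n \<subseteq> Aset K J S w m"
  using assms(2)
proof (induction n)
  case 0 then show ?case by simp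
next
  case (Suc n)
  then show ?case using Aset_props[OF assms(1), of n] by (cases "m = Suc n") auto
qed

end

context rifs_loc begin

abbreviation F where "F w \<equiv> rattractor K J S w"

lemma F_props:
  assumes "good w"
  shows "F w \<subseteq> K" "F w \<noteq> {}" "compact (F w)"
proof -
  have FA: "F w = (\<Inter>n. Aset K J S w n)" by (rule rattractor_Aset)
  show sub: "F w \<subseteq> K" unfolding FA using Aset_0[of K J S w] by blast
  have "K \<inter> \<Inter>(range (Aset K J S w)) \<noteq> {}"
  proof (rule compact_imp_fip)
    show "compact K" by (rule K_compact)
    fix T assume "T \<in> range (Aset K J S w)"
    then show "closed T" using Aset_props[OF assms] compact_imp_closed by blast
  next
    fix F' assume F': "finite F'" "F' \<subseteq> range (Aset K J S w)"
    then obtain I where I: "finite I" "F' = Aset K J S w ` I"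
      using finite_subset_image[OF F'] by auto
    show "K \<inter> \<Inter>F' \<noteq> {}"
    proof (cases "I = {}")
      case True then show ?thesis using I K_ne by simp
    next
      case False
      have "Aset K J S w (Max I) \<subseteq> K \<inter> \<Inter>F'"
      proof -
        have "Aset K J S w (Max I) \<subseteq> Aset K J S w i" if "i \<in> I" for i
          using Aset_mono[OF assms] Max_ge[OF I(1) that] by blast
        then show ?thesis using I Aset_props[OF assms] by blast
      qed
      moreover have "Aset K J S w (Max I) \<noteq> {}" using Aset_props[OF assms] by blast
      ultimately show ?thesis by blast
    qed
  qed
  then show "F w \<noteq> {}" unfolding FA by blast
  have "closed (F w)" unfolding FA using Aset_props[OF assms] compact_imp_closed by blast
  then have "compact (K \<inter> F w)" using K_compact by blast
  then show "compact (F w)" using sub by (simp add: Int_absorb1)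
qed

end

context rifs_loc begin
lemma F_step:
  assumes "good w"
  shows "F w = (\<Union>u\<in>J (w 0). S (w 0) u ` F (\<lambda>n. w (Suc n)))"
proof (intro equalityI subsetI)
  have w0: "w 0 \<in> {1..N}" using assms unfolding good_def by auto
  let ?A = "Aset K J S (\<lambda>n. w (Suc n))"
  fix x assume x: "x \<in> F w"
  have xA: "x \<in> Aset K J S w n" for n using x unfolding rattractor_Aset by (rule INT_D) simp
  have "\<exists>u\<in>J (w 0). \<forall>n. x \<in> S (w 0) u ` ?A n"
  proof (rule ccontr)
    assume "\<not> ?thesis"
    then have "\<forall>u\<in>J (w 0). \<exists>n. x \<notin> S (w 0) u ` ?A n" by blast
    then obtain f where f: "\<And>u. u \<in> J (w 0) \<Longrightarrow> x \<notin> S (w 0) u ` ?A (f u)" by metis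
    define m where "m = Max (f ` J (w 0))"
    have "x \<in> Aset K J S w (Suc m)" by (rule xA)
    then obtain u where u: "u \<in> J (w 0)" "x \<in> S (w 0) u ` ?A m" unfolding Aset_Suc by (rule UN_E)
    have "f u \<le> m" unfolding m_def using J_fin[OF w0] u(1) by simp
    then have "?A m \<subseteq> ?A (f u)" by (rule Aset_mono[OF good_Suc[OF assms]])
    then have "S (w 0) u ` ?A m \<subseteq> S (w 0) u ` ?A (f u)" by (rule image_mono)
    then show False using u(2) f[OF u(1)] by (meson subsetD)
  qed
  then obtain u where u: "u \<in> J (w 0)" "\<And>n. x \<in> S (w 0) u ` ?A n" by blast
  have "\<forall>n. \<exists>z. z \<in> ?A n \<and> x = S (w 0) u z" using u(2) by blast
  then obtain y where y: "\<And>n. y n \<in> ?A n \<and> x = S (w 0) u (y n)" by metis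
  have yK: "y n \<in> K" for n
  proof -
    have "?A n \<subseteq> K" using Aset_props[OF good_Suc[OF assms], of n] by (rule conjunct1)
    then show ?thesis using y[of n] by blast
  qed
  have eqy: "y n = y 0" for n
  proof (rule S_inj[OF w0 u(1) yK yK])
    show "S (w 0) u (y n) = S (w 0) u (y 0)" using y[of n] y[of 0] by simp
  qed
  have "y 0 \<in> ?A n" for n using y[of n] eqy[of n] by simp
  then have "y 0 \<in> F (\<lambda>n. w (Suc n))" unfolding rattractor_Aset by (rule INT_I)
  moreover have "x = S (w 0) u (y 0)" using y[of 0] by simp
  ultimately have "x \<in> S (w 0) u ` F (\<lambda>n. w (Suc n))" by (rule rev_image_eqI)
  then show "x \<in> (\<Union>u\<in>J (w 0). S (w 0) u ` F (\<lambda>n. w (Suc n)))" using u(1) by (rule UN_I[rotated])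
next
  have w0: "w 0 \<in> {1..N}" using assms unfolding good_def by auto
  fix x assume "x \<in> (\<Union>u\<in>J (w 0). S (w 0) u ` F (\<lambda>n. w (Suc n)))"
  then obtain u where u1: "u \<in> J (w 0)" "x \<in> S (w 0) u ` F (\<lambda>n. w (Suc n))" by (rule UN_E)
  from u1(2) obtain y where "y \<in> F (\<lambda>n. w (Suc n))" "x = S (w 0) u y" by (rule imageE) auto
  with u1 have u: "u \<in> J (w 0)" "y \<in> F (\<lambda>n. w (Suc n))" "x = S (w 0) u y" by auto
  have "x \<in> Aset K J S w n" for n
  proof (cases n)
    case 0
    have "y \<in> K" using F_props(1)[OF good_Suc[OF assms]] u(2) by (rule subsetD)
    then show ?thesis using 0 u S_K[OF w0] by (simp add: Aset_0)
  next
    case (Suc m)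
    have "y \<in> Aset K J S (\<lambda>n. w (Suc n)) m" using u(2) unfolding rattractor_Aset by (rule INT_D) simp
    then have "x \<in> S (w 0) u ` Aset K J S (\<lambda>n. w (Suc n)) m" using u(3) by simp
    then show ?thesis unfolding Suc Aset_Suc using u(1) by (rule UN_I[rotated])
  qed
  then show "x \<in> F w" unfolding rattractor_Aset by (rule INT_I)
qed

end

context rifs_loc begin

lemma F_ksteps:
  assumes "good w"
  shows "F w = (\<Union>us\<in>Wd J w k. compw S w 0 us ` F (\<lambda>n. w (n + k)))"
  using assms
proof (induction k arbitrary: w)
  case 0
  then show ?case unfolding Wd_0 by simp
next
  case (Suc k)
  let ?w' = "\<lambda>n. w (Suc n)"
  have ww: "(\<lambda>n. ?w' (n + k)) = (\<lambda>n. w (n + Suc k))" by simp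
  have IH: "F ?w' = (\<Union>us\<in>Wd J ?w' k. compw S ?w' 0 us ` F (\<lambda>n. w (n + Suc k)))"
    using Suc.IH[OF good_Suc[OF Suc.prems]] unfolding ww .
  show ?case
  proof (intro equalityI subsetI)
    fix x assume "x \<in> F w"
    then have "x \<in> (\<Union>u\<in>J (w 0). S (w 0) u ` F ?w')" using F_step[OF Suc.prems] by simp
    then obtain u where u1: "u \<in> J (w 0)" "x \<in> S (w 0) u ` F ?w'" by (rule UN_E)
    from u1(2) obtain y where y: "y \<in> F ?w'" "x = S (w 0) u y" by (rule imageE) auto
    from y(1) have "y \<in> (\<Union>us\<in>Wd J ?w' k. compw S ?w' 0 us ` F (\<lambda>n. w (n + Suc k)))"
      using IH by simp
    then obtain us where us1: "us \<in> Wd J ?w' k" "y \<in> compw S ?w' 0 us ` F (\<lambda>n. w (n + Suc k))"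
      by (rule UN_E)
    from us1(2) obtain z where z: "z \<in> F (\<lambda>n. w (n + Suc k))" "y = compw S ?w' 0 us z"
      by (rule imageE) auto
    have mem: "u # us \<in> Wd J w (Suc k)" using Wd_Suc u1(1) us1(1) by metis
    have "x = compw S w 0 (u # us) z" using y(2) z(2) by (simp add: compw_shift)
    then have "x \<in> compw S w 0 (u # us) ` F (\<lambda>n. w (n + Suc k))" using z(1) by simp
    then show "x \<in> (\<Union>us\<in>Wd J w (Suc k). compw S w 0 us ` F (\<lambda>n. w (n + Suc k)))"
      using mem by (rule UN_I[rotated])
  next
    fix x assume "x \<in> (\<Union>us\<in>Wd J w (Suc k). compw S w 0 us ` F (\<lambda>n. w (n + Suc k)))"
    then obtain vs where vs1: "vs \<in> Wd J w (Suc k)" "x \<in> compw S w 0 vs ` F (\<lambda>n. w (n + Suc k))"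
      by (rule UN_E)
    from vs1(2) obtain z where z: "z \<in> F (\<lambda>n. w (n + Suc k))" "x = compw S w 0 vs z"
      by (rule imageE) auto
    obtain u us where h: "vs = u # us" "u \<in> J (w 0)" "us \<in> Wd J ?w' k" using Wd_Suc vs1(1) by metis
    have "compw S ?w' 0 us z \<in> compw S ?w' 0 us ` F (\<lambda>n. w (n + Suc k))" using z(1) by simp
    then have "compw S ?w' 0 us z \<in> (\<Union>us\<in>Wd J ?w' k. compw S ?w' 0 us ` F (\<lambda>n. w (n + Suc k)))"
      using h(3) by (rule UN_I[rotated])
    then have yF: "compw S ?w' 0 us z \<in> F ?w'" using IH by simp
    have "x = S (w 0) u (compw S ?w' 0 us z)" using z(2) h(1) by (simp add: compw_shift)
    then have "x \<in> S (w 0) u ` F ?w'" using yF by simp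
    then have "x \<in> (\<Union>u\<in>J (w 0). S (w 0) u ` F ?w')" using h(2) by (rule UN_I[rotated])
    then show "x \<in> F w" using F_step[OF Suc.prems] by simp
  qed
qed

end

context rifs_loc begin

lemma finite_Wd': "good w \<Longrightarrow> finite (Wd J w k)"
  by (rule finite_Wd[of w "{1..N}"]) (auto simp: good_def J_fin)

lemma g_contract:
  assumes "good w" "us \<in> Wd J w k" "x \<in> K" "y \<in> K"
  shows "dist (compw S w 0 us x) (compw S w 0 us y) \<le> dist x y"
proof -
  have "dist (compw S w 0 us x) (compw S w 0 us y) \<le> r ^ k * dist x y"
    using compw_props[OF assms(1,2)] assms(3,4) by blast
  also have "\<dots> \<le> 1 * dist x y" using r by (intro mult_right_mono power_le_one) auto
  finally show ?thesis by simp
qed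

lemma B1:
  assumes w: "good w" and d: "0 < d"
  shows "cover_num (F w) d \<le> card (Wd J w k) * cover_num (F (\<lambda>n. w (n + k))) d"
proof -
  let ?G = "F (\<lambda>n. w (n + k))"
  have gG: "good (\<lambda>n. w (n + k))" using good_shift[OF w] .
  have GK: "?G \<subseteq> K" using F_props(1)[OF gG] .
  have exG: "\<exists>C. finite_delta_cover ?G d C" using compact_has_cover[OF F_props(3)[OF gG] d] .
  have sub: "F w \<subseteq> (\<Union>us\<in>Wd J w k. compw S w 0 us ` ?G)" using F_ksteps[OF w, of k] by simp
  have each: "cover_num (compw S w 0 us ` ?G) d \<le> cover_num ?G d \<and> (\<exists>C. finite_delta_cover (compw S w 0 us ` ?G) d C)"
    if us: "us \<in> Wd J w k" for us
    using cover_num_image_upper[OF GK g_contract[OF w us] exG] by blast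
  have "cover_num (F w) d \<le> (\<Sum>us\<in>Wd J w k. cover_num (compw S w 0 us ` ?G) d)"
    using cover_num_union[OF finite_Wd'[OF w] sub] each by blast
  also have "\<dots> \<le> (\<Sum>us\<in>Wd J w k. cover_num ?G d)" using each by (intro sum_mono) blast
  also have "\<dots> = card (Wd J w k) * cover_num ?G d" by simp
  finally show ?thesis .
qed

lemma K_diam: "\<exists>B\<ge>0. \<forall>y\<in>K. \<forall>z\<in>K. dist y z \<le> B"
proof -
  obtain a where a: "a \<in> K" using K_ne by auto
  have "bounded K" using K_compact compact_imp_bounded by blast
  then obtain B0 where B0: "\<forall>y\<in>K. dist a y \<le> B0" using bounded_any_center[of K a] by blast
  have "dist y z \<le> 2 * B0" if yz: "y \<in> K" "z \<in> K" for y z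
  proof -
    have "dist a y \<le> B0" "dist a z \<le> B0" using B0 yz by auto
    moreover have "dist y z \<le> dist a y + dist a z" using dist_triangle[of y z a] by (simp add: dist_commute)
    ultimately show ?thesis by linarith
  qed
  moreover have "0 \<le> B0" using B0 a by (metis dist_self)
  ultimately show ?thesis by (intro exI[of _ "2*B0"]) auto
qed

lemma B2:
  assumes w: "good w" and x: "x \<in> F w" and e: "0 < e"
  shows "\<exists>k us. us \<in> Wd J w k \<and> compw S w 0 us ` F (\<lambda>n. w (n + k)) \<subseteq> ball x e \<and>
     compw S w 0 us ` F (\<lambda>n. w (n + k)) \<subseteq> F w"
proof -
  obtain B where B: "0 \<le> B" "\<And>y z. y \<in> K \<Longrightarrow> z \<in> K \<Longrightarrow> dist y z \<le> B" using K_diam by blast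
  have "\<forall>\<^sub>F n in sequentially. \<bar>r^n\<bar> < e / (B+1)"
    using r B(1) e by (intro Archimedean_eventually_pow_inverse) auto
  then obtain k where k0: "\<bar>r^k\<bar> < e / (B+1)" unfolding eventually_sequentially by blast
  then have k: "r^k < e / (B+1)" using r by simp
  then have "r^k * (B+1) < e" using B(1) by (simp add: field_simps)
  moreover have "r^k * B \<le> r^k * (B+1)" using r by (intro mult_left_mono) auto
  ultimately have rk: "r^k * B < e" by linarith
  let ?G = "F (\<lambda>n. w (n + k))"
  have GK: "?G \<subseteq> K" using F_props(1)[OF good_shift[OF w]] .
  have eq: "F w = (\<Union>us\<in>Wd J w k. compw S w 0 us ` ?G)" using F_ksteps[OF w, of k] .
  then have "x \<in> (\<Union>us\<in>Wd J w k. compw S w 0 us ` ?G)" using x by simp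
  then obtain us where us: "us \<in> Wd J w k" "x \<in> compw S w 0 us ` ?G" by (rule UN_E)
  from us(2) obtain z where z: "z \<in> ?G" "x = compw S w 0 us z" by (rule imageE) auto
  have "compw S w 0 us ` ?G \<subseteq> ball x e"
  proof
    fix y assume "y \<in> compw S w 0 us ` ?G"
    then obtain z' where z': "z' \<in> ?G" "y = compw S w 0 us z'" by (rule imageE) auto
    have zK: "z \<in> K" "z' \<in> K" using z(1) z'(1) GK by auto
    have "dist x y \<le> r ^ k * dist z z'" using compw_props[OF w us(1)] zK z(2) z'(2) by blast
    also have "\<dots> \<le> r ^ k * B" using B(2)[OF zK] r by (intro mult_left_mono) auto
    finally show "y \<in> ball x e" using rk by simp
  qed
  moreover have "compw S w 0 us ` ?G \<subseteq> F w" using eq us(1) by blast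
  ultimately show ?thesis using us(1) by blast
qed

end

lemma powr_ident:
  assumes d: "0 < (d::real)"
  shows "(d / 2 powr (real m + 2)) powr (-t) * (2 * d / 2 powr real m) powr s
   = d powr (s - t) * (2 powr (2*t) * 2 powr s) * (2 powr (t - s)) ^ m"
proof -
  have e1: "(2 powr (t - s)) ^ m = exp (real m * ((t - s) * ln 2))"
    by (simp add: powr_def exp_of_nat_mult[symmetric])
  show ?thesis unfolding e1 using d
    by (simp add: powr_def ln_div ln_mult exp_add[symmetric] algebra_simps)
qed

lemma disj_ball_dist:
  fixes P :: "('a::metric_space \<times> real) set"
  assumes "disjoint_family_on (\<lambda>(x,r). ball x r) P" "p \<in> P" "q \<in> P" "p \<noteq> q" "0 < snd p"
  shows "snd q \<le> dist (fst p) (fst q)"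
proof (rule ccontr)
  assume "\<not> ?thesis"
  then have h1: "fst p \<in> ball (fst q) (snd q)" by (simp add: dist_commute)
  have h2: "fst p \<in> ball (fst p) (snd p)" using assms(5) by simp
  have dj: "(\<lambda>(x,r). ball x r) p \<inter> (\<lambda>(x,r). ball x r) q = {}"
    using assms(1-4) unfolding disjoint_family_on_def by blast
  have "fst p \<in> (\<lambda>(x,r). ball x r) p \<inter> (\<lambda>(x,r). ball x r) q"
    using h1 h2 by (cases p, cases q) simp
  then show False using dj by simp
qed

lemma packing_count:
  fixes X :: "'a::metric_space set" and Q :: "('a \<times> real) set"
  assumes "finite Q" "\<forall>p\<in>Q. fst p \<in> X \<and> \<rho> < snd p"
    "disjoint_family_on (\<lambda>(x,r). ball x r) Q" "finite_delta_cover X \<rho> C" "0 \<le> \<rho>"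
  shows "card Q \<le> card C"
proof -
  have pos: "0 < snd p" if "p \<in> Q" for p using assms(2,5) that by force
  have inj: "inj_on fst Q"
  proof (rule inj_onI)
    fix p q assume pq: "p \<in> Q" "q \<in> Q" "fst p = fst q"
    show "p = q"
    proof (rule ccontr)
      assume "p \<noteq> q"
      then have "snd q \<le> dist (fst p) (fst q)" using disj_ball_dist[OF assms(3) pq(1,2) _ pos[OF pq(1)]] by blast
      then show False using pq(3) pos[OF pq(2)] by simp
    qed
  qed
  have sep: "\<rho> < dist x y" if xy: "x \<in> fst ` Q" "y \<in> fst ` Q" "x \<noteq> y" for x y
  proof -
    obtain p q where pq: "p \<in> Q" "q \<in> Q" "x = fst p" "y = fst q" using xy(1,2) by blast
    then have "p \<noteq> q" using xy(3) by blast
    then have "snd q \<le> dist (fst p) (fst q)" using disj_ball_dist[OF assms(3) pq(1,2) _ pos[OF pq(1)]] by blast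
    then show ?thesis using pq assms(2) by force
  qed
  have "fst ` Q \<subseteq> X" using assms(2) by blast
  from sep_card(2)[OF assms(4) this sep] show ?thesis using card_image[OF inj] by simp
qed

lemma packing_sum_bound:
  fixes X :: "'a::metric_space set" and P :: "('a \<times> real) set"
  assumes P: "finite P" "\<forall>(x,r)\<in>P. x \<in> X \<and> 0 < r \<and> r \<le> \<delta>" "disjoint_family_on (\<lambda>(x,r). ball x r) P"
    and d: "0 < \<delta>" and st: "t < s" "0 \<le> s"
    and Nb: "\<And>\<rho>. 0 < \<rho> \<Longrightarrow> \<rho> < \<delta> \<Longrightarrow> \<exists>C. finite_delta_cover X \<rho> C \<and> real (card C) \<le> \<rho> powr (-t)"
  shows "(\<Sum>(x,r)\<in>P. (2*r) powr s) \<le> \<delta> powr (s-t) * (2 powr (2*t) * 2 powr s) / (1 - 2 powr (t-s))"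
proof -
  define kf where "kf p = nat \<lfloor>log 2 (\<delta> / snd p)\<rfloor>" for p :: "'a \<times> real"
  define q where "q = (2::real) powr (t-s)"
  define A where "A = \<delta> powr (s-t) * (2 powr (2*t) * 2 powr s)"
  define h where "h m = (2*\<delta> / 2 powr real m) powr s" for m :: nat
  have "(2::real) powr (t-s) < 2 powr 0" using st by (intro powr_less_mono) auto
  then have q01: "0 < q" "q < 1" unfolding q_def by auto
  have Pp: "fst p \<in> X" "0 < snd p" "snd p \<le> \<delta>" if "p \<in> P" for p using P(2) that by auto
  have kf_props: "2 powr real (kf p) \<le> \<delta> / snd p \<and> \<delta> / snd p < 2 powr (real (kf p) + 1)" if p: "p \<in> P" for p
  proof -
    define L where "L = log 2 (\<delta> / snd p)"
    have r: "0 < snd p" "snd p \<le> \<delta>" using Pp[OF p] by auto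
    then have ge1: "1 \<le> \<delta> / snd p" by simp
    then have "0 \<le> L" unfolding L_def by simp
    then have rk: "real (kf p) = of_int \<lfloor>L\<rfloor>" unfolding kf_def L_def by simp
    have eq: "2 powr L = \<delta> / snd p" unfolding L_def using ge1 by simp
    have "2 powr real (kf p) \<le> 2 powr L" unfolding rk by (rule powr_mono) auto
    moreover have "2 powr L < 2 powr (real (kf p) + 1)" unfolding rk
      by (rule powr_less_mono) (auto simp: real_of_int_floor_add_one_gt)
    ultimately show ?thesis using eq by simp
  qed
  have stepa: "(2 * snd p) powr s \<le> h (kf p)" if p: "p \<in> P" for p
  proof -
    have r: "0 < snd p" using Pp[OF p] by auto
    have pos: "0 < 2 powr real (kf p)" by simp
    have "snd p * 2 powr real (kf p) \<le> \<delta>" using kf_props[OF p] r by (simp add: field_simps)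
    then have "2 * snd p \<le> 2 * \<delta> / 2 powr real (kf p)" using pos by (simp add: field_simps)
    then show ?thesis unfolding h_def using r st(2) by (intro powr_mono2) auto
  qed
  have stepb: "real (card {p\<in>P. kf p = m}) \<le> (\<delta> / 2 powr (real m + 2)) powr (-t)" for m
  proof -
    define \<rho> where "\<rho> = \<delta> / 2 powr (real m + 2)"
    have "(2::real) powr 0 < 2 powr (real m + 2)" by (intro powr_less_mono) auto
    then have big: "1 < 2 powr (real m + 2)" by simp
    have rho: "0 < \<rho>" "\<rho> < \<delta>" unfolding \<rho>_def using d big by (auto simp: field_simps)
    obtain C where C: "finite_delta_cover X \<rho> C" "real (card C) \<le> \<rho> powr (-t)" using Nb[OF rho] by blast
    have "\<forall>p\<in>{p\<in>P. kf p = m}. fst p \<in> X \<and> \<rho> < snd p"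
    proof
      fix p assume pm: "p \<in> {p\<in>P. kf p = m}"
      then have p: "p \<in> P" "kf p = m" by auto
      have r: "0 < snd p" using Pp[OF p(1)] by auto
      have "\<delta> / snd p < 2 powr (real m + 1)" using kf_props[OF p(1)] p(2) by simp
      also have "\<dots> < 2 powr (real m + 2)" by (rule powr_less_mono) auto
      finally have "\<delta> < snd p * 2 powr (real m + 2)" using r by (simp add: field_simps)
      then have "\<rho> < snd p" unfolding \<rho>_def by (simp add: field_simps)
      then show "fst p \<in> X \<and> \<rho> < snd p" using Pp[OF p(1)] by simp
    qed
    moreover have "disjoint_family_on (\<lambda>(x,r). ball x r) {p\<in>P. kf p = m}"
      using P(3) by (rule disjoint_family_on_mono[rotated]) auto
    ultimately have "card {p\<in>P. kf p = m} \<le> card C"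
      using packing_count[OF _ _ _ C(1)] P(1) rho(1) by simp
    then show ?thesis using C(2) unfolding \<rho>_def by linarith
  qed
  have hnn: "0 \<le> h m" for m unfolding h_def by simp
  have "(\<Sum>(x,r)\<in>P. (2*r) powr s) = (\<Sum>p\<in>P. (2 * snd p) powr s)" by (simp add: split_def)
  also have "\<dots> \<le> (\<Sum>p\<in>P. h (kf p))" using stepa by (rule sum_mono)
  also have "\<dots> = (\<Sum>m\<in>kf ` P. (\<Sum>p\<in>{p\<in>P. kf p = m}. h (kf p)))"
    by (rule sum.image_gen[OF P(1)])
  also have "\<dots> = (\<Sum>m\<in>kf ` P. real (card {p\<in>P. kf p = m}) * h m)"
    by (rule sum.cong) auto
  also have "\<dots> \<le> (\<Sum>m\<in>kf ` P. (\<delta> / 2 powr (real m + 2)) powr (-t) * h m)"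
    by (rule sum_mono) (rule mult_right_mono[OF stepb hnn])
  also have "\<dots> = (\<Sum>m\<in>kf ` P. A * q ^ m)"
    unfolding h_def A_def q_def by (rule sum.cong[OF refl]) (rule powr_ident[OF d])
  also have "\<dots> = A * (\<Sum>m\<in>kf ` P. q ^ m)" by (simp add: sum_distrib_left)
  also have "\<dots> \<le> A * (\<Sum>m. q ^ m)"
  proof (rule mult_left_mono)
    show "(\<Sum>m\<in>kf ` P. q ^ m) \<le> (\<Sum>m. q ^ m)"
      by (rule sum_le_suminf) (use q01 P(1) in \<open>auto intro: summable_geometric\<close>)
    show "0 \<le> A" unfolding A_def by simp
  qed
  also have "\<dots> = A / (1 - q)" using q01 by (simp add: suminf_geometric)
  finally show ?thesis unfolding A_def q_def by simp
qed

lemma cover_bound_from_limsup: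
  fixes X :: "'a::metric_space set"
  assumes X: "compact X" "X \<noteq> {}"
    and lt: "Limsup (at_right 0) (\<lambda>\<delta>. ereal (ln (real (cover_num X \<delta>)) / - ln \<delta>)) < ereal t"
  shows "\<exists>b>0. \<forall>\<rho>. 0 < \<rho> \<longrightarrow> \<rho> < b \<longrightarrow> (\<exists>C. finite_delta_cover X \<rho> C \<and> real (card C) \<le> \<rho> powr (-t))"
proof -
  have "eventually (\<lambda>\<delta>. ereal (ln (real (cover_num X \<delta>)) / - ln \<delta>) < ereal t) (at_right 0)"
    using Limsup_lessD[OF lt] .
  then obtain b where b: "b > 0" "\<And>y. y > 0 \<Longrightarrow> y < b \<Longrightarrow> ereal (ln (real (cover_num X y)) / - ln y) < ereal t"
    unfolding eventually_at_right_field by auto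
  define b' where "b' = min b 1"
  have "\<exists>C. finite_delta_cover X \<rho> C \<and> real (card C) \<le> \<rho> powr (-t)" if rho: "0 < \<rho>" "\<rho> < b'" for \<rho>
  proof -
    have ex: "\<exists>C. finite_delta_cover X \<rho> C" using compact_has_cover[OF X(1) rho(1)] .
    obtain C where C: "finite_delta_cover X \<rho> C" "card C = cover_num X \<rho>" using cover_num_ex[OF ex] by blast
    have N1: "1 \<le> cover_num X \<rho>" using cover_num_pos[OF X(2) ex] .
    have "ln (real (cover_num X \<rho>)) / - ln \<rho> < t" using b(2)[of \<rho>] rho unfolding b'_def by simp
    moreover have lnpos: "0 < - ln \<rho>" using rho unfolding b'_def by simp
    ultimately have "ln (real (cover_num X \<rho>)) < t * (- ln \<rho>)" by (simp only: pos_divide_less_eq)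
    also have "\<dots> = ln (\<rho> powr (-t))" by simp
    finally have "real (cover_num X \<rho>) < \<rho> powr (-t)"
      using N1 rho(1) by (subst (asm) ln_less_cancel_iff) auto
    then show ?thesis using C by auto
  qed
  moreover have "b' > 0" unfolding b'_def using b by simp
  ultimately show ?thesis by blast
qed

lemma dir1:
  fixes X :: "'a::metric_space set"
  assumes X: "compact X" "X \<noteq> {}"
    and lt: "Limsup (at_right 0) (\<lambda>\<delta>. ereal (ln (real (cover_num X \<delta>)) / - ln \<delta>)) < ereal s"
    and s0: "0 \<le> s"
  shows "packing_measure s X = 0"
proof -
  obtain t where t: "Limsup (at_right 0) (\<lambda>\<delta>. ereal (ln (real (cover_num X \<delta>)) / - ln \<delta>)) < ereal t"
    "ereal t < ereal s" using ereal_dense2[OF lt] by blast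
  then have ts: "t < s" by simp
  obtain b where b: "b > 0" "\<And>\<rho>. 0 < \<rho> \<Longrightarrow> \<rho> < b \<Longrightarrow> \<exists>C. finite_delta_cover X \<rho> C \<and> real (card C) \<le> \<rho> powr (-t)"
    using cover_bound_from_limsup[OF X t(1)] by blast
  define Cst where "Cst = 2 powr (2*t) * 2 powr s / (1 - 2 powr (t-s))"
  have "(2::real) powr (t-s) < 2 powr 0" using ts by (intro powr_less_mono) auto
  then have Cpos: "0 < Cst" unfolding Cst_def by simp
  have pre_small: "packing_premeasure s X \<le> ennreal e" if e: "0 < e" for e
  proof -
    define \<delta> where "\<delta> = min (b/2) ((e/Cst) powr (1/(s-t)))"
    have dpos: "0 < \<delta>" unfolding \<delta>_def using b e Cpos by simp
    have dlt: "\<delta> < b" unfolding \<delta>_def using b by simp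
    have "\<delta> powr (s-t) \<le> ((e/Cst) powr (1/(s-t))) powr (s-t)"
      unfolding \<delta>_def using ts dpos by (intro powr_mono2) (auto simp: \<delta>_def)
    also have "\<dots> = e / Cst" using ts e Cpos by (simp add: powr_powr)
    finally have dsmall: "\<delta> powr (s-t) * Cst \<le> e" using Cpos by (simp add: field_simps)
    have "packing_pre_delta s \<delta> X \<le> ennreal e"
      unfolding packing_pre_delta_def
    proof (rule SUP_least)
      fix P assume "P \<in> {P. finite P \<and> (\<forall>(x,r)\<in>P. x \<in> X \<and> 0 < r \<and> r \<le> \<delta>) \<and>
                  disjoint_family_on (\<lambda>(x,r). ball x r) P}"
      then have P: "finite P" "\<forall>(x,r)\<in>P. x \<in> X \<and> 0 < r \<and> r \<le> \<delta>" "disjoint_family_on (\<lambda>(x,r). ball x r) P"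
        by auto
      have Nb: "\<exists>C. finite_delta_cover X \<rho> C \<and> real (card C) \<le> \<rho> powr (-t)" if "0 < \<rho>" "\<rho> < \<delta>" for \<rho>
        using b(2) that dlt by simp
      have "(\<Sum>(x,r)\<in>P. (2*r) powr s) \<le> \<delta> powr (s-t) * (2 powr (2*t) * 2 powr s) / (1 - 2 powr (t-s))"
        by (rule packing_sum_bound[OF P dpos ts s0 Nb])
      also have "\<dots> = \<delta> powr (s-t) * Cst" unfolding Cst_def by simp
      also have "\<dots> \<le> e" by (rule dsmall)
      finally have le: "(\<Sum>(x,r)\<in>P. (2*r) powr s) \<le> e" .
      have "(\<Sum>(x,r)\<in>P. ennreal ((2*r) powr s)) = (\<Sum>p\<in>P. ennreal ((2 * snd p) powr s))"
        by (simp add: split_def)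
      also have "\<dots> = ennreal (\<Sum>p\<in>P. (2 * snd p) powr s)" by (rule sum_ennreal) simp
      also have "\<dots> = ennreal (\<Sum>(x,r)\<in>P. (2*r) powr s)" by (simp add: split_def)
      also have "\<dots> \<le> ennreal e" using le by (rule ennreal_leI)
      finally show "(\<Sum>(x,r)\<in>P. ennreal ((2*r) powr s)) \<le> ennreal e" .
    qed
    moreover have "packing_premeasure s X \<le> packing_pre_delta s \<delta> X"
      unfolding packing_premeasure_def using dpos by (intro INF_lower) simp
    ultimately show ?thesis by (rule order_trans[rotated])
  qed
  have pre0: "packing_premeasure s X = 0"
  proof -
    have "packing_premeasure s X \<le> 0"
      by (rule ennreal_le_epsilon) (use pre_small in simp)
    then show ?thesis by simp
  qed
  have "packing_measure s X \<le> (\<Sum>i. packing_premeasure s ((\<lambda>i. X) i))"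
    unfolding packing_measure_def by (rule INF_lower) auto
  also have "\<dots> = 0" using pre0 by simp
  finally show ?thesis by simp
qed

lemma pre_delta_lower:
  fixes G' E :: "'a::metric_space set"
  assumes G': "compact G'" "G' \<subseteq> closure E" and rho: "0 < \<rho>" "\<rho> \<le> \<delta>"
  shows "ennreal (real (cover_num G' (8*\<rho>)) * (2*\<rho>) powr s) \<le> packing_pre_delta s \<delta> E"
proof -
  have a: "0 < 4*\<rho>" using rho by simp
  obtain Y where Y: "Y \<subseteq> G'" "finite Y" "\<forall>x\<in>Y. \<forall>y\<in>Y. x \<noteq> y \<longrightarrow> 4*\<rho> < dist x y"
      "cover_num G' (2*(4*\<rho>)) \<le> card Y"
    using max_sep_cover_num[OF G'(1) a] by blast
  have "\<forall>y\<in>Y. \<exists>z\<in>E. dist z y < \<rho>"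
  proof
    fix y assume "y \<in> Y"
    then have "y \<in> closure E" using Y(1) G'(2) by blast
    then show "\<exists>z\<in>E. dist z y < \<rho>" using rho(1) unfolding closure_approachable by blast
  qed
  then obtain z where z: "\<And>y. y \<in> Y \<Longrightarrow> z y \<in> E \<and> dist (z y) y < \<rho>" by metis
  have far: "2*\<rho> < dist (z x) (z y)" if xy: "x \<in> Y" "y \<in> Y" "x \<noteq> y" for x y
  proof -
    have "4*\<rho> < dist x y" using Y(3) xy by blast
    moreover have "dist x y \<le> dist x (z x) + dist (z x) (z y) + dist (z y) y"
      using dist_triangle[of x y "z x"] dist_triangle[of "z x" y "z y"] by linarith
    moreover have "dist x (z x) < \<rho>" "dist (z y) y < \<rho>" using z xy by (auto simp: dist_commute)
    ultimately show ?thesis by linarith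
  qed
  define P where "P = (\<lambda>y. (z y, \<rho>)) ` Y"
  have inj: "inj_on (\<lambda>y. (z y, \<rho>)) Y"
  proof (rule inj_onI)
    fix x y assume xy: "x \<in> Y" "y \<in> Y" "(z x, \<rho>) = (z y, \<rho>)"
    show "x = y"
    proof (rule ccontr)
      assume "x \<noteq> y"
      then have "2*\<rho> < dist (z x) (z y)" using far xy by blast
      then show False using xy(3) rho by simp
    qed
  qed
  have Pin: "P \<in> {P. finite P \<and> (\<forall>(x,r)\<in>P. x \<in> E \<and> 0 < r \<and> r \<le> \<delta>) \<and>
                  disjoint_family_on (\<lambda>(x,r). ball x r) P}"
  proof (intro CollectI conjI)
    show "finite P" unfolding P_def using Y(2) by simp
    show "\<forall>(x,r)\<in>P. x \<in> E \<and> 0 < r \<and> r \<le> \<delta>" unfolding P_def using z rho by auto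
    show "disjoint_family_on (\<lambda>(x,r). ball x r) P" unfolding disjoint_family_on_def
    proof (intro ballI impI)
      fix p q assume pq: "p \<in> P" "q \<in> P" "p \<noteq> q"
      then obtain x y where xy: "x \<in> Y" "y \<in> Y" "p = (z x, \<rho>)" "q = (z y, \<rho>)" unfolding P_def by blast
      then have "x \<noteq> y" using pq(3) by blast
      then have d: "2*\<rho> < dist (z x) (z y)" using far xy by blast
      show "(\<lambda>(x,r). ball x r) p \<inter> (\<lambda>(x,r). ball x r) q = {}"
      proof (rule ccontr)
        assume "\<not> ?thesis"
        then obtain v where "v \<in> ball (z x) \<rho>" "v \<in> ball (z y) \<rho>" using xy by auto
        then have "dist (z x) v < \<rho>" "dist (z y) v < \<rho>" by auto
        then have "dist (z x) (z y) < 2*\<rho>" using dist_triangle[of "z x" "z y" v] by (simp add: dist_commute)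
        then show False using d by simp
      qed
    qed
  qed
  have "(\<Sum>(x,r)\<in>P. ennreal ((2*r) powr s)) = (\<Sum>y\<in>Y. ennreal ((2*\<rho>) powr s))"
    unfolding P_def by (subst sum.reindex[OF inj]) simp
  also have "\<dots> = ennreal (real (card Y) * (2*\<rho>) powr s)"
    by (simp add: ennreal_mult' ennreal_of_nat_eq_real_of_nat)
  finally have sumeq: "(\<Sum>(x,r)\<in>P. ennreal ((2*r) powr s)) = ennreal (real (card Y) * (2*\<rho>) powr s)" .
  have "ennreal (real (cover_num G' (8*\<rho>)) * (2*\<rho>) powr s) \<le> ennreal (real (card Y) * (2*\<rho>) powr s)"
    using Y(4) by (intro ennreal_leI mult_right_mono) auto
  also have "\<dots> \<le> packing_pre_delta s \<delta> E"
    unfolding packing_pre_delta_def sumeq[symmetric] by (rule SUP_upper[OF Pin])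
  finally show ?thesis .
qed

lemma baire_step:
  fixes X :: "'a::metric_space set" and E :: "nat \<Rightarrow> 'a set"
  assumes X: "compact X" "X \<noteq> {}" "X \<subseteq> (\<Union>i. E i)"
  shows "\<exists>i x e. x \<in> X \<and> 0 < e \<and> X \<inter> ball x e \<subseteq> closure (E i)"
proof (rule ccontr)
  assume nex: "\<not> ?thesis"
  let ?T = "top_of_set X"
  define G where "G i = X \<inter> closure (E i)" for i
  have int0: "?T interior_of (G i) = {}" for i
  proof (rule ccontr)
    assume "?T interior_of (G i) \<noteq> {}"
    then obtain y U where yU: "openin ?T U" "y \<in> U" "U \<subseteq> G i" unfolding interior_of_def by blast
    then obtain V where V: "open V" "U = X \<inter> V" unfolding openin_open by blast
    then obtain e where e: "0 < e" "ball y e \<subseteq> V" using yU(2) open_contains_ball by blast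
    have "X \<inter> ball y e \<subseteq> closure (E i)" using e(2) V(2) yU(3) unfolding G_def by blast
    moreover have "y \<in> X" using yU(2) V(2) by blast
    ultimately show False using nex e(1) by blast
  qed
  have sp: "locally_compact_space ?T \<and> regular_space ?T"
  proof
    have cs: "compact_space ?T" using X(1) by (intro compact_space_subtopology) simp
    then show "locally_compact_space ?T" by (rule compact_imp_locally_compact_space)
    show "regular_space ?T"
      by (rule compact_Hausdorff_imp_regular_space[OF cs Hausdorff_space_subtopology]) simp
  qed
  have "?T interior_of \<Union>(range G) = {}"
  proof (rule Baire_category_alt)
    show "completely_metrizable_space ?T \<or> locally_compact_space ?T \<and> regular_space ?T" using sp by blast
    show "countable (range G)" by simp
    fix T assume "T \<in> range G"
    then obtain i where i: "T = G i" by blast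
    show "closedin ?T T \<and> ?T interior_of T = {}"
      unfolding i using int0 closedin_closed_Int[of "closure (E i)" X] unfolding G_def by simp
  qed
  moreover have "\<Union>(range G) = X"
  proof
    show "\<Union>(range G) \<subseteq> X" unfolding G_def by blast
    show "X \<subseteq> \<Union>(range G)"
    proof
      fix x assume "x \<in> X"
      then obtain i where "x \<in> E i" using X(3) by blast
      then have "x \<in> G i" using \<open>x \<in> X\<close> closure_subset unfolding G_def by blast
      then show "x \<in> \<Union>(range G)" by blast
    qed
  qed
  ultimately have "?T interior_of (topspace ?T) = {}" by simp
  then show False using X(2) interior_of_topspace[of ?T] by simp
qed

context rifs_loc begin

lemma g_cont: assumes "good w" "us \<in> Wd J w k" shows "continuous_on K (compw S w 0 us)"
  unfolding continuous_on_iff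
proof (intro ballI allI impI)
  fix x e assume x: "x \<in> K" and e: "(0::real) < e"
  show "\<exists>d>0. \<forall>x'\<in>K. dist x' x < d \<longrightarrow> dist (compw S w 0 us x') (compw S w 0 us x) < e"
    using g_contract[OF assms _ x] e by (intro exI[of _ e]) (auto intro: le_less_trans)
qed

lemma freq_cover:
  assumes w: "good w" and lt: "ereal t < Limsup (at_right 0) (\<lambda>\<delta>. ereal (ln (real (cover_num (F w) \<delta>)) / - ln \<delta>))"
    and b: "0 < b"
  shows "\<exists>\<rho>. 0 < \<rho> \<and> \<rho> < b \<and> \<rho> powr (-t) < real (cover_num (F w) \<rho>)"
proof (rule ccontr)
  assume nex: "\<not> ?thesis"
  define b' where "b' = min b 1"
  have "eventually (\<lambda>\<delta>. ereal (ln (real (cover_num (F w) \<delta>)) / - ln \<delta>) \<le> ereal t) (at_right 0)"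
    unfolding eventually_at_right_field
  proof (intro exI[of _ b'] conjI allI impI)
    show "(0::real) < b'" unfolding b'_def using b by simp
    fix y :: real assume y: "0 < y" "y < b'"
    have ex: "\<exists>C. finite_delta_cover (F w) y C" using compact_has_cover[OF F_props(3)[OF w] y(1)] .
    have N1: "1 \<le> cover_num (F w) y" using cover_num_pos[OF F_props(2)[OF w] ex] .
    have "real (cover_num (F w) y) \<le> y powr (-t)" using nex y unfolding b'_def by force
    then have "ln (real (cover_num (F w) y)) \<le> ln (y powr (-t))" using N1 y(1) by (subst ln_le_cancel_iff) auto
    also have "\<dots> = t * (- ln y)" by simp
    finally have le: "ln (real (cover_num (F w) y)) \<le> t * (- ln y)" .
    have lnpos: "0 < - ln y" using y unfolding b'_def by simp
    have "ln (real (cover_num (F w) y)) / - ln y \<le> t" using le by (simp only: pos_divide_le_eq[OF lnpos])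
    then show "ereal (ln (real (cover_num (F w) y)) / - ln y) \<le> ereal t" by simp
  qed
  then have "Limsup (at_right 0) (\<lambda>\<delta>. ereal (ln (real (cover_num (F w) \<delta>)) / - ln \<delta>)) \<le> ereal t"
    by (rule Limsup_bounded)
  then show False using lt by simp
qed

end

context rifs_loc begin

lemma dir2:
  assumes w: "good w" and s0: "0 \<le> s"
    and lt: "ereal s < Limsup (at_right 0) (\<lambda>\<delta>. ereal (ln (real (cover_num (F w) \<delta>)) / - ln \<delta>))"
  shows "packing_measure s (F w) \<noteq> 0"
proof
  assume m0: "packing_measure s (F w) = 0"
  let ?X = "F w"
  obtain t where st: "ereal s < ereal t" "ereal t < Limsup (at_right 0) (\<lambda>\<delta>. ereal (ln (real (cover_num ?X \<delta>)) / - ln \<delta>))"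
    using ereal_dense2[OF lt] by blast
  have ts: "s < t" using st(1) by simp
  have Xc: "compact ?X" and Xne: "?X \<noteq> {}" using F_props[OF w] by auto
  have "(INF E \<in> {E :: nat \<Rightarrow> 'a set. ?X \<subseteq> (\<Union>i. E i)}. \<Sum>i. packing_premeasure s (E i)) < 1"
    using m0 unfolding packing_measure_def by simp
  then obtain E where E: "?X \<subseteq> (\<Union>i. E i)" "(\<Sum>i. packing_premeasure s (E i)) < 1"
    unfolding INF_less_iff by blast
  have Ei: "packing_premeasure s (E i) < 1" for i using ennreal_suminf_lessD[OF E(2)] .
  obtain i x0 e where x0: "x0 \<in> ?X" "0 < e" "?X \<inter> ball x0 e \<subseteq> closure (E i)"
    using baire_step[OF Xc Xne E(1)] by blast
  obtain k us where us: "us \<in> Wd J w k" "compw S w 0 us ` F (\<lambda>n. w (n + k)) \<subseteq> ball x0 e"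
    "compw S w 0 us ` F (\<lambda>n. w (n + k)) \<subseteq> ?X"
    using B2[OF w x0(1,2)] by blast
  let ?G = "F (\<lambda>n. w (n + k))"
  let ?g = "compw S w 0 us"
  let ?G' = "?g ` ?G"
  have gG: "good (\<lambda>n. w (n + k))" using good_shift[OF w] .
  have GK: "?G \<subseteq> K" and Gc: "compact ?G" using F_props[OF gG] by auto
  have G'c: "compact ?G'"
    using compact_continuous_image[OF continuous_on_subset[OF g_cont[OF w us(1)] GK] Gc] .
  have G'cl: "?G' \<subseteq> closure (E i)" using us(2,3) x0(3) by blast
  obtain \<delta> where \<delta>: "0 < \<delta>" "packing_pre_delta s \<delta> (E i) < 1"
    using Ei[of i] unfolding packing_premeasure_def INF_less_iff by auto
  define c' where "c' = c ^ k"
  have c'pos: "0 < c'" unfolding c'_def using c by simp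
  have lowg: "c' * dist x y \<le> dist (?g x) (?g y)" if "x \<in> K" "y \<in> K" for x y
    using compw_props[OF w us(1)] that unfolding c'_def by blast
  define M where "M = card (Wd J w k)"
  have Mpos: "0 < M"
  proof -
    have "Wd J w k \<noteq> {}" using us(1) by blast
    then show ?thesis unfolding M_def using finite_Wd'[OF w] by (simp add: card_gt_0_iff)
  qed
  define Z where "Z = real M / ((c'/4) powr s)"
  have Zpos: "0 < Z" unfolding Z_def using Mpos c'pos by simp
  define \<rho>1 where "\<rho>1 = Z powr (1/(s-t))"
  have r1pos: "0 < \<rho>1" unfolding \<rho>1_def using Zpos by simp
  define b0 where "b0 = min (min 1 (8*\<delta>/c')) \<rho>1"
  have b0pos: "0 < b0" unfolding b0_def using r1pos \<delta>(1) c'pos by simp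
  obtain \<rho>' where \<rho>': "0 < \<rho>'" "\<rho>' < b0" "\<rho>' powr (-t) < real (cover_num ?X \<rho>')"
    using freq_cover[OF w st(2) b0pos] by blast
  define \<rho> where "\<rho> = c' * \<rho>' / 8"
  have rpos: "0 < \<rho>" unfolding \<rho>_def using c'pos \<rho>'(1) by simp
  have rle: "\<rho> \<le> \<delta>"
  proof -
    have "\<rho>' < 8*\<delta>/c'" using \<rho>'(2) unfolding b0_def by simp
    then show ?thesis unfolding \<rho>_def using c'pos by (simp add: field_simps)
  qed
  have r8: "8*\<rho>/c' = \<rho>'" unfolding \<rho>_def using c'pos by simp
  have NX: "cover_num ?X \<rho>' \<le> M * cover_num ?G \<rho>'" unfolding M_def by (rule B1[OF w \<rho>'(1)])
  have exG': "\<exists>C. finite_delta_cover ?G' (8*\<rho>) C" using compact_has_cover[OF G'c] rpos by simp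
  have NG: "cover_num ?G \<rho>' \<le> cover_num ?G' (8*\<rho>)"
    using cover_num_image_lower(1)[OF GK c'pos lowg exG'] unfolding r8 .
  have pl: "ennreal (real (cover_num ?G' (8*\<rho>)) * (2*\<rho>) powr s) \<le> packing_pre_delta s \<delta> (E i)"
    by (rule pre_delta_lower[OF G'c G'cl rpos rle])
  then have "ennreal (real (cover_num ?G' (8*\<rho>)) * (2*\<rho>) powr s) < 1" using \<delta>(2) by (rule le_less_trans)
  then have "ennreal (real (cover_num ?G' (8*\<rho>)) * (2*\<rho>) powr s) < ennreal 1" by simp
  then have pl1: "real (cover_num ?G' (8*\<rho>)) * (2*\<rho>) powr s < 1"
    by (subst (asm) ennreal_less_iff) auto
  have pw: "(2*\<rho>) powr s = (c'/4) powr s * \<rho>' powr s"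
  proof -
    have e2: "2*\<rho> = (c'/4) * \<rho>'" unfolding \<rho>_def by simp
    have "((c'/4) * \<rho>') powr s = (c'/4) powr s * \<rho>' powr s"
      using c'pos \<rho>'(1) by (intro powr_mult)
    then show ?thesis unfolding e2 .
  qed
  have pwpos: "0 < (2*\<rho>) powr s" using rpos by simp
  have "\<rho>' powr (-t) * (2*\<rho>) powr s < real (cover_num ?X \<rho>') * (2*\<rho>) powr s"
    using \<rho>'(3) pwpos by simp
  also have "\<dots> \<le> real M * real (cover_num ?G' (8*\<rho>)) * (2*\<rho>) powr s"
  proof -
    have "M * cover_num ?G \<rho>' \<le> M * cover_num ?G' (8*\<rho>)" using NG by (rule mult_le_mono2)
    with NX have "cover_num ?X \<rho>' \<le> M * cover_num ?G' (8*\<rho>)" by (rule le_trans)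
    then have "real (cover_num ?X \<rho>') \<le> real (M * cover_num ?G' (8*\<rho>))" by (rule of_nat_mono)
    then have "real (cover_num ?X \<rho>') \<le> real M * real (cover_num ?G' (8*\<rho>))" by simp
    then show ?thesis using pwpos by (intro mult_right_mono) auto
  qed
  also have "\<dots> = real M * (real (cover_num ?G' (8*\<rho>)) * (2*\<rho>) powr s)" by (rule mult.assoc)
  also have "\<dots> < real M * 1" using pl1 Mpos by (intro mult_strict_left_mono) auto
  also have "\<dots> = real M" by simp
  finally have lt1: "\<rho>' powr (-t) * (2*\<rho>) powr s < real M" .
  have e3: "\<rho>' powr (-t) * \<rho>' powr s = \<rho>' powr (s - t)"
    using powr_add[of \<rho>' "-t" s] by simp
  have "\<rho>' powr (-t) * (2*\<rho>) powr s = (\<rho>' powr (-t) * \<rho>' powr s) * (c'/4) powr s"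
    unfolding pw by (simp only: ac_simps)
  also have "\<dots> = \<rho>' powr (s - t) * (c'/4) powr s" unfolding e3 ..
  finally have "\<rho>' powr (s - t) * (c'/4) powr s < real M" using lt1 by simp
  moreover have Ppos: "0 < (c'/4) powr s" using c'pos by simp
  ultimately have "\<rho>' powr (s - t) < Z" unfolding Z_def by (simp add: pos_less_divide_eq[OF Ppos])
  moreover have "Z \<le> \<rho>' powr (s - t)"
  proof -
    have "\<rho>' \<le> \<rho>1" using \<rho>'(2) unfolding b0_def by simp
    then have "\<rho>1 powr (s-t) \<le> \<rho>' powr (s-t)" using ts \<rho>'(1) by (intro powr_mono2') auto
    moreover have "\<rho>1 powr (s-t) = Z" unfolding \<rho>1_def using ts Zpos by (simp add: powr_powr)
    ultimately show ?thesis by simp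
  qed
  ultimately show False by simp
qed

end

lemma bilip_Q:
  fixes f :: "'a::metric_space \<Rightarrow> 'a"
  assumes "bilip_contraction K f"
  shows "\<exists>c r. 0 < c \<and> 0 \<le> r \<and> r < 1 \<and> (\<forall>x\<in>K. \<forall>y\<in>K. c * dist x y \<le> dist (f x) (f y) \<and> dist (f x) (f y) \<le> r * dist x y)"
proof -
  obtain c r where cr: "0 < c" "r < 1" "\<And>x y. x \<in> K \<Longrightarrow> y \<in> K \<Longrightarrow> x \<noteq> y \<Longrightarrow>
        c \<le> dist (f x) (f y) / dist x y \<and> dist (f x) (f y) / dist x y \<le> r"
    using assms unfolding bilip_contraction_def by blast
  have "c * dist x y \<le> dist (f x) (f y) \<and> dist (f x) (f y) \<le> max r 0 * dist x y" if xy: "x \<in> K" "y \<in> K" for x y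
  proof (cases "x = y")
    case True then show ?thesis by simp
  next
    case False
    then have d: "0 < dist x y" by simp
    have "c \<le> dist (f x) (f y) / dist x y" "dist (f x) (f y) / dist x y \<le> r" using cr(3)[OF xy False] by auto
    then have "c * dist x y \<le> dist (f x) (f y)" "dist (f x) (f y) \<le> r * dist x y"
      using d by (simp_all add: pos_le_divide_eq pos_divide_le_eq)
    moreover have "r * dist x y \<le> max r 0 * dist x y" using d by (intro mult_right_mono) auto
    ultimately show ?thesis by linarith
  qed
  then show ?thesis using cr(1,2) by (intro exI[of _ c] exI[of _ "max r 0"]) auto
qed

lemma rifs_consts:
  assumes R: "rifs K N J S"
  shows "\<exists>c r. 0 < c \<and> 0 \<le> r \<and> r < 1 \<and> (\<forall>i j x y. i \<in> {1..N} \<longrightarrow> j \<in> J i \<longrightarrow> x \<in> K \<longrightarrow> y \<in> K \<longrightarrow>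
      c * dist x y \<le> dist (S i j x) (S i j y) \<and> dist (S i j x) (S i j y) \<le> r * dist x y)"
proof -
  define Q where "Q c r ij \<longleftrightarrow> (\<forall>x\<in>K. \<forall>y\<in>K. c * dist x y \<le> dist (S (fst ij) (snd ij) x) (S (fst ij) (snd ij) y) \<and>
       dist (S (fst ij) (snd ij) x) (S (fst ij) (snd ij) y) \<le> r * dist x y)" for c r :: real and ij :: "nat \<times> nat"
  have mono: "Q c' r' ij" if "Q c r ij" "0 < c'" "c' \<le> c" "r \<le> r'" for c r c' r' ij
    unfolding Q_def
  proof (intro ballI conjI)
    fix x y assume xy: "x \<in> K" "y \<in> K"
    have h: "c * dist x y \<le> dist (S (fst ij) (snd ij) x) (S (fst ij) (snd ij) y)"
      "dist (S (fst ij) (snd ij) x) (S (fst ij) (snd ij) y) \<le> r * dist x y"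
      using that(1) xy unfolding Q_def by auto
    have "c' * dist x y \<le> c * dist x y" using that(3) by (intro mult_right_mono) auto
    then show "c' * dist x y \<le> dist (S (fst ij) (snd ij) x) (S (fst ij) (snd ij) y)" using h(1) by linarith
    have "r * dist x y \<le> r' * dist x y" using that(4) by (intro mult_right_mono) auto
    then show "dist (S (fst ij) (snd ij) x) (S (fst ij) (snd ij) y) \<le> r' * dist x y" using h(2) by linarith
  qed
  define IJ where "IJ = Sigma {1..N} J"
  have finIJ: "finite IJ" unfolding IJ_def using R unfolding rifs_def by auto
  have one: "\<exists>c r. 0 < c \<and> 0 \<le> r \<and> r < 1 \<and> Q c r ij" if "ij \<in> IJ" for ij
  proof -
    have "bilip_contraction K (S (fst ij) (snd ij))" using R that unfolding rifs_def IJ_def by auto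
    from bilip_Q[OF this] show ?thesis unfolding Q_def by blast
  qed
  have "\<forall>A. A \<subseteq> IJ \<longrightarrow> (\<exists>c r. 0 < c \<and> 0 \<le> r \<and> r < 1 \<and> (\<forall>ij\<in>A. Q c r ij))"
  proof (intro allI impI)
    fix A assume "A \<subseteq> IJ"
    then have "finite A" using finIJ finite_subset by blast
    then show "\<exists>c r. 0 < c \<and> 0 \<le> r \<and> r < 1 \<and> (\<forall>ij\<in>A. Q c r ij)" using \<open>A \<subseteq> IJ\<close>
    proof (induction A rule: finite_induct)
      case empty
      show ?case by (intro exI[of _ 1] exI[of _ 0]) auto
    next
      case (insert a A)
      obtain c1 r1 where 1: "0 < c1" "0 \<le> r1" "r1 < 1" "\<forall>ij\<in>A. Q c1 r1 ij" using insert by auto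
      have aIJ: "a \<in> IJ" using insert.prems by simp
      from one[OF aIJ] obtain c2 r2 where 2: "0 < c2" "0 \<le> r2" "r2 < 1" "Q c2 r2 a" by blast
      have "\<forall>ij\<in>insert a A. Q (min c1 c2) (max r1 r2) ij"
        using 1 2 mono[of c1 r1 _ "min c1 c2" "max r1 r2"] mono[of c2 r2 a "min c1 c2" "max r1 r2"] by auto
      then show ?case using 1 2 by (intro exI[of _ "min c1 c2"] exI[of _ "max r1 r2"]) auto
    qed
  qed
  then obtain c r where cr: "0 < c" "0 \<le> r" "r < 1" "\<forall>ij\<in>IJ. Q c r ij" by blast
  have main: "\<forall>i j x y. i \<in> {1..N} \<longrightarrow> j \<in> J i \<longrightarrow> x \<in> K \<longrightarrow> y \<in> K \<longrightarrow>
      c * dist x y \<le> dist (S i j x) (S i j y) \<and> dist (S i j x) (S i j y) \<le> r * dist x y"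
  proof (intro allI impI)
    fix i j x y assume h: "i \<in> {1..N}" "j \<in> J i" "x \<in> K" "y \<in> K"
    then have "(i,j) \<in> IJ" unfolding IJ_def by auto
    then have "Q c r (i,j)" using cr(4) by blast
    then show "c * dist x y \<le> dist (S i j x) (S i j y) \<and> dist (S i j x) (S i j y) \<le> r * dist x y"
      using h(3,4) unfolding Q_def by auto
  qed
  show ?thesis using cr(1-3) main by blast
qed

theorem lemma3p2:
  fixes K :: "'a::metric_space set" and N :: nat and J :: "nat \<Rightarrow> nat set"
    and S :: "nat \<Rightarrow> nat \<Rightarrow> 'a \<Rightarrow> 'a" and w :: "nat \<Rightarrow> nat"
  assumes "rifs K N J S"
    and "\<forall>n. w n \<in> {1..N}"
  shows "packing_dim (rattractor K J S w) = upper_box_dim (rattractor K J S w)"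
proof -
  obtain c r where cr: "0 < c" "0 \<le> r" "r < 1" "\<forall>i j x y. i \<in> {1..N} \<longrightarrow> j \<in> J i \<longrightarrow> x \<in> K \<longrightarrow> y \<in> K \<longrightarrow>
      c * dist x y \<le> dist (S i j x) (S i j y) \<and> dist (S i j x) (S i j y) \<le> r * dist x y"
    using rifs_consts[OF assms(1)] by blast
  interpret L: rifs_loc K N J S c r
    by (unfold_locales) (use assms(1) cr in auto)
  have w: "L.good w" unfolding L.good_def using assms(2) .
  let ?X = "rattractor K J S w"
  have Xc: "compact ?X" and Xne: "?X \<noteq> {}" using L.F_props[OF w] by auto
  define f where "f \<delta> = ereal (ln (real (cover_num ?X \<delta>)) / - ln \<delta>)" for \<delta>
  define D where "D = Limsup (at_right 0) f"
  have ub: "upper_box_dim ?X = D"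
    unfolding upper_box_dim_def D_def f_def using compact_has_cover[OF Xc] by simp
  have D0: "0 \<le> D" unfolding D_def
  proof (rule le_Limsup)
    show "at_right (0::real) \<noteq> bot" by simp
    show "\<forall>\<^sub>F x in at_right 0. 0 \<le> f x"
      unfolding eventually_at_right_field
    proof (intro exI[of _ 1] conjI allI impI)
      fix y :: real assume y: "0 < y" "y < 1"
      have ex: "\<exists>C. finite_delta_cover ?X y C" using compact_has_cover[OF Xc y(1)] .
      have N1: "1 \<le> cover_num ?X y" using cover_num_pos[OF Xne ex] .
      have "0 \<le> ln (real (cover_num ?X y))" using N1 by simp
      moreover have "0 < - ln y" using y by simp
      ultimately have "0 \<le> ln (real (cover_num ?X y)) / - ln y" by (rule divide_nonneg_pos)
      then have "ereal 0 \<le> ereal (ln (real (cover_num ?X y)) / - ln y)" by (simp only: ereal_less_eq)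
      then show "0 \<le> f y" unfolding f_def zero_ereal_def .
    qed simp
  qed
  define A where "A = {ereal s | s. 0 \<le> s \<and> packing_measure s ?X = 0}"
  have pd: "packing_dim ?X = Inf A" unfolding packing_dim_def A_def ..
  have ge: "D \<le> Inf A"
  proof (rule Inf_greatest)
    fix a assume "a \<in> A"
    then obtain s where s: "a = ereal s" "0 \<le> s" "packing_measure s ?X = 0" unfolding A_def by blast
    show "D \<le> a"
    proof (rule ccontr)
      assume "\<not> D \<le> a"
      then have "ereal s < D" using s(1) by simp
      then have "packing_measure s ?X \<noteq> 0" using L.dir2[OF w s(2)] unfolding D_def f_def by blast
      then show False using s(3) by simp
    qed
  qed
  have le: "Inf A \<le> D"
  proof (rule ccontr)
    assume "\<not> Inf A \<le> D"
    then have "D < Inf A" by simp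
    then obtain y where y: "D < ereal y" "ereal y < Inf A" using ereal_dense2 by blast
    have y0: "0 \<le> y" using D0 y(1) by (metis ereal_less_eq(5) le_less_trans less_imp_le)
    have "packing_measure y ?X = 0" using dir1[OF Xc Xne _ y0] y(1) unfolding D_def f_def by blast
    then have "ereal y \<in> A" unfolding A_def using y0 by blast
    then have "Inf A \<le> ereal y" by (rule Inf_lower)
    then show False using y(2) by simp
  qed
  show ?thesis unfolding pd ub using ge le by simp
qed

end
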